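(* Let $\mathcal C$ be an operadic category with set of objects $C$. Then the following data form a skew monoidal category $\mathrm{Coll}_{\mathcal C}(\mathbf{Set})$: the underlying category $\mathbf{Set}/C$; the tensor product $*$ with $(X*Y)_c=\sum_{\varphi:c\to d}X_d\times\prod_{i\in|d|}Y_{\varphi^{-1}i}$; the unit $U$ given by the set of trivial objects with its inclusion into $C$; and the structure maps $\alpha:(X*Y)*Z\to X*(Y*Z)$, $\alpha(x,\psi,y,\varphi,z)=(x,\psi\varphi,y,\varphi^\psi,z)$; $\lambda:U*X\to X$, $\lambda(u,\varphi,x)=x$; $\rho:X\to X*U$, $\rho(x)=(x,1_{\partial x},(1_{\partial x}^{-1}i)_{i\in|\partial x|})$.
   Context: Operadic categories: $\mathcal S$ is a skeleton of finite sets (objects $\mathbb N$), with fixed equivalences $R_I:\mathcal S/I\to\mathcal S^I$ sending $f:J\to I$ to its fibres. An operadic category is a category $\mathcal C$ with a functor $|\cdot|:\mathcal C\to\mathcal S$ and functors $R_c:\mathcal C/c\to\mathcal C^{|c|}$ with $|\cdot|^{|c|}\circ R_c=R_{|c|}\circ(|\cdot|/c)$; the fibre $\psi^{-1}i$ of $\psi:c\to d$ at $i\in|d|$ is the $i$-th component of $R_d(\psi)$ (so $|\psi^{-1}i|=|\psi|^{-1}i$); for $\varphi:b\to c,\psi:c\to d$, $\varphi^\psi:R_d(\psi\varphi)\to R_d(\psi)$ is $R_d$ applied to $\varphi:\psi\varphi\to\psi$ in $\mathcal C/d$, with components $\varphi^\psi_j:(\psi\varphi)^{-1}j\to\psi^{-1}j$;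 $u$ is trivial if $|u|=1$ and $R_u=\mathrm{dom}$. Axioms: fibres of identities are trivial; double slice condition: for $\psi:c\to d$, $R_c\circ(\mathrm{dom}/\psi)=(\cong)\circ(\prod_jR_{\psi^{-1}j})\circ(R_d/\psi)$ as functors $(\mathcal C/d)/\psi\to\mathcal C^{|c|}$, using $\mathcal C^{|d|}/R_d\psi\cong\prod_j\mathcal C/\psi^{-1}j$ and $\prod_j\mathcal C^{|\psi^{-1}j|}\cong\mathcal C^{|c|}$ via $|c|\cong\sum_j|\psi|^{-1}j$. Notation: an object of $\mathbf{Set}/C$ is a set $X$ with $\partial:X\to C$, and $X_c=\partial^{-1}(c)$. An element of $(X*Y)_c$ is written $(x,\varphi,y)$ with $\varphi:c\to d$, $x\in X_d$, $y=(y_i)_{i\in|d|}$, $y_i\in Y_{\varphi^{-1}i}$, and $\partial(x,\varphi,y)=c$. An element of $((X*Y)*Z)_c$ is written $(x,\psi,y,\varphi,z)$ with $\varphi:c\to d$, $\psi:d\to e$, $x\in X_e$, $y_j\in Y_{\psi^{-1}j}$ ($j\in|e|$), $z_i\in Z_{\varphi^{-1}i}$ ($i\in|d|$); its image $(x,\psi\varphi,y,\varphi^\psi,z)$ denotes the element of $X*(Y*Z)$ whose $j$-th component in $Y*Z$ is $(y_j,\varphi^\psi_j,(z_i)_{i\in|\psi^{-1}j|})$. In $U*X$ an element has form $(u,\varphi,x)$ with $\varphi:c\to u$, $u$ trivial, $x\in X_c$ (the unique fibre of $\varphi$ being $c$). A skew monoidal category is a category $\mathcal E$ with a functor $*:\mathcal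 E\times\mathcal E\to\mathcal E$, an object $U$, and natural (not necessarily invertible) maps $\alpha:(X*Y)*Z\to X*(Y*Z)$, $\lambda:U*X\to X$, $\rho:X\to X*U$ satisfying: $\lambda_U\rho_U=1_U$; $\lambda_{X*Y}\alpha_{U,X,Y}=\lambda_X*1_Y$; $\alpha_{X,Y,U}\rho_{X*Y}=1_X*\rho_Y$; $(1_X*\lambda_Y)\alpha_{X,U,Y}(\rho_X*1_Y)=1_{X*Y}$; and the pentagon $(1*\alpha)\alpha(\alpha*1)=\alpha\alpha$ as maps $((W*X)*Y)*Z\to W*(X*(Y*Z))$. *)

theory Defs
  imports Main "HOL-Library.FuncSet"
begin

text \<open>An object n of S is the finite ordinal {0..<n}; a morphism m -> n is a function
  nat => nat mapping {0..<m} into {0..<n} (only its values below m matter).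
  The fixed equivalence R_I sends f : J -> I to its fibres, each fibre f^{-1}(i)
  being identified with an ordinal via the order-preserving enumeration.\<close>

definition sfibl :: "(nat \<Rightarrow> nat) \<Rightarrow> nat \<Rightarrow> nat \<Rightarrow> nat list" where
  "sfibl f n i = filter (\<lambda>j. f j = i) [0..<n]"

text \<open>Position of j inside its fibre f^{-1}(f j) (so sfibl f n (f j) ! sidx f j = j).\<close>
definition sidx :: "(nat \<Rightarrow> nat) \<Rightarrow> nat \<Rightarrow> nat" where
  "sidx f j = length (filter (\<lambda>j'. f j' = f j) [0..<j])"

record ('o, 'm) opcat =
  obs :: "'o set"
  mors :: "'m set"
  src :: "'m \<Rightarrow> 'o"
  tgt :: "'m \<Rightarrow> 'o"
  cmp :: "'m \<Rightarrow> 'm \<Rightarrow> 'm"         \<comment> \<open>cmp g f = g \<circ> f\<close>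
  idm :: "'o \<Rightarrow> 'm"
  card_o :: "'o \<Rightarrow> nat"
  card_m :: "'m \<Rightarrow> nat \<Rightarrow> nat"
  fibre :: "'m \<Rightarrow> nat \<Rightarrow> 'o"
  fibre_m :: "'m \<Rightarrow> 'm \<Rightarrow> nat \<Rightarrow> 'm"  \<comment> \<open>fibre_m phi psi j = phi^psi_j\<close>

definition is_cat :: "('o, 'm, 'z) opcat_scheme \<Rightarrow> bool" where
  "is_cat C \<longleftrightarrow>
     (\<forall>f\<in>mors C. src C f \<in> obs C \<and> tgt C f \<in> obs C) \<and>
     (\<forall>a\<in>obs C. idm C a \<in> mors C \<and> src C (idm C a) = a \<and> tgt C (idm C a) = a) \<and>
     (\<forall>f\<in>mors C. \<forall>g\<in>mors C. tgt C f = src C g \<longrightarrow>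
        cmp C g f \<in> mors C \<and> src C (cmp C g f) = src C f \<and> tgt C (cmp C g f) = tgt C g) \<and>
     (\<forall>f\<in>mors C. \<forall>g\<in>mors C. \<forall>h\<in>mors C. tgt C f = src C g \<longrightarrow> tgt C g = src C h \<longrightarrow>
        cmp C h (cmp C g f) = cmp C (cmp C h g) f) \<and>
     (\<forall>f\<in>mors C. cmp C (idm C (tgt C f)) f = f \<and> cmp C f (idm C (src C f)) = f)"

definition card_functor :: "('o, 'm, 'z) opcat_scheme \<Rightarrow> bool" where
  "card_functor C \<longleftrightarrow>
     (\<forall>f\<in>mors C. \<forall>k<card_o C (src C f). card_m C f k < card_o C (tgt C f)) \<and>
     (\<forall>a\<in>obs C. \<forall>k<card_o C a. card_m C (idm C a) k = k) \<and>
     (\<forall>f\<in>mors C. \<forall>g\<in>mors C. tgt C f = src C g \<longrightarrow>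
        (\<forall>k<card_o C (src C f). card_m C (cmp C g f) k = card_m C g (card_m C f k)))"

text \<open>Each R_d : C/d -> C^{|d|} is a functor (objects of C/d: psi with tgt psi = d;
  a morphism phi : psi phi -> psi of C/d is sent to (fibre_m phi psi j)_j).\<close>
definition fibre_functors :: "('o, 'm, 'z) opcat_scheme \<Rightarrow> bool" where
  "fibre_functors C \<longleftrightarrow>
     (\<forall>\<psi>\<in>mors C. \<forall>i<card_o C (tgt C \<psi>). fibre C \<psi> i \<in> obs C) \<and>
     (\<forall>\<phi>\<in>mors C. \<forall>\<psi>\<in>mors C. tgt C \<phi> = src C \<psi> \<longrightarrow> (\<forall>i<card_o C (tgt C \<psi>).
        fibre_m C \<phi> \<psi> i \<in> mors C \<and>
        src C (fibre_m C \<phi> \<psi> i) = fibre C (cmp C \<psi> \<phi>) i \<and>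
        tgt C (fibre_m C \<phi> \<psi> i) = fibre C \<psi> i)) \<and>
     (\<forall>\<psi>\<in>mors C. \<forall>i<card_o C (tgt C \<psi>).
        fibre_m C (idm C (src C \<psi>)) \<psi> i = idm C (fibre C \<psi> i)) \<and>
     (\<forall>\<phi>1\<in>mors C. \<forall>\<phi>2\<in>mors C. \<forall>\<psi>\<in>mors C.
        tgt C \<phi>1 = src C \<phi>2 \<longrightarrow> tgt C \<phi>2 = src C \<psi> \<longrightarrow> (\<forall>i<card_o C (tgt C \<psi>).
        fibre_m C (cmp C \<phi>2 \<phi>1) \<psi> i =
          cmp C (fibre_m C \<phi>2 \<psi> i) (fibre_m C \<phi>1 (cmp C \<psi> \<phi>2) i)))"

text \<open>|.|^{|c|} o R_c = R_{|c|} o (|.|/c), on objects and on morphisms.\<close>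
definition fibre_card_compat :: "('o, 'm, 'z) opcat_scheme \<Rightarrow> bool" where
  "fibre_card_compat C \<longleftrightarrow>
     (\<forall>\<psi>\<in>mors C. \<forall>i<card_o C (tgt C \<psi>).
        card_o C (fibre C \<psi> i) = length (sfibl (card_m C \<psi>) (card_o C (src C \<psi>)) i)) \<and>
     (\<forall>\<phi>\<in>mors C. \<forall>\<psi>\<in>mors C. tgt C \<phi> = src C \<psi> \<longrightarrow> (\<forall>i<card_o C (tgt C \<psi>).
        \<forall>k<card_o C (fibre C (cmp C \<psi> \<phi>) i).
          card_m C (fibre_m C \<phi> \<psi> i) k =
            sidx (card_m C \<psi>)
              (card_m C \<phi> (sfibl (card_m C (cmp C \<psi> \<phi>)) (card_o C (src C \<phi>)) i ! k))))"

definition trivial_ob :: "('o, 'm, 'z) opcat_scheme \<Rightarrow> 'o \<Rightarrow> bool" where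
  "trivial_ob C u \<longleftrightarrow> u \<in> obs C \<and> card_o C u = 1 \<and>
     (\<forall>f\<in>mors C. tgt C f = u \<longrightarrow> fibre C f 0 = src C f) \<and>
     (\<forall>\<phi>\<in>mors C. \<forall>f\<in>mors C. tgt C \<phi> = src C f \<longrightarrow> tgt C f = u \<longrightarrow> fibre_m C \<phi> f 0 = \<phi>)"

text \<open>Double slice condition, on objects and on morphisms of (C/d)/psi, where the
  isomorphism prod_j C^{|psi^{-1} j|} = C^{|c|} sends the index k < |c| to the pair
  (|psi| k, position of k in the fibre of |psi| over |psi| k).\<close>
definition double_slice :: "('o, 'm, 'z) opcat_scheme \<Rightarrow> bool" where
  "double_slice C \<longleftrightarrow>
     (\<forall>\<phi>\<in>mors C. \<forall>\<psi>\<in>mors C. tgt C \<phi> = src C \<psi> \<longrightarrow> (\<forall>k<card_o C (src C \<psi>).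
        fibre C \<phi> k = fibre C (fibre_m C \<phi> \<psi> (card_m C \<psi> k)) (sidx (card_m C \<psi>) k))) \<and>
     (\<forall>\<sigma>\<in>mors C. \<forall>\<phi>\<in>mors C. \<forall>\<psi>\<in>mors C. tgt C \<sigma> = src C \<phi> \<longrightarrow> tgt C \<phi> = src C \<psi> \<longrightarrow>
        (\<forall>k<card_o C (src C \<psi>).
          fibre_m C \<sigma> \<phi> k =
            fibre_m C (fibre_m C \<sigma> (cmp C \<psi> \<phi>) (card_m C \<psi> k))
                      (fibre_m C \<phi> \<psi> (card_m C \<psi> k)) (sidx (card_m C \<psi>) k)))"

definition operadic_category :: "('o, 'm, 'z) opcat_scheme \<Rightarrow> bool" where
  "operadic_category C \<longleftrightarrow> is_cat C \<and> card_functor C \<and> fibre_functors C \<and>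
     fibre_card_compat C \<and>
     (\<forall>a\<in>obs C. \<forall>i<card_o C a. trivial_ob C (fibre C (idm C a) i)) \<and>
     double_slice C"

definition is_category ::
  "'x set \<Rightarrow> ('x \<Rightarrow> 'x \<Rightarrow> 'f set) \<Rightarrow> ('f \<Rightarrow> 'f \<Rightarrow> 'f) \<Rightarrow> ('x \<Rightarrow> 'f) \<Rightarrow> bool" where
  "is_category Ob Hom cp idt \<longleftrightarrow>
     (\<forall>A\<in>Ob. idt A \<in> Hom A A) \<and>
     (\<forall>A\<in>Ob. \<forall>B\<in>Ob. \<forall>D\<in>Ob. \<forall>f\<in>Hom A B. \<forall>g\<in>Hom B D. cp g f \<in> Hom A D) \<and>
     (\<forall>A\<in>Ob. \<forall>B\<in>Ob. \<forall>f\<in>Hom A B. cp (idt B) f = f \<and> cp f (idt A) = f) \<and>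
     (\<forall>A\<in>Ob. \<forall>B\<in>Ob. \<forall>D\<in>Ob. \<forall>E\<in>Ob. \<forall>f\<in>Hom A B. \<forall>g\<in>Hom B D. \<forall>h\<in>Hom D E.
        cp h (cp g f) = cp (cp h g) f)"

definition skew_monoidal_category ::
  "'x set \<Rightarrow> ('x \<Rightarrow> 'x \<Rightarrow> 'f set) \<Rightarrow> ('f \<Rightarrow> 'f \<Rightarrow> 'f) \<Rightarrow> ('x \<Rightarrow> 'f) \<Rightarrow>
   ('x \<Rightarrow> 'x \<Rightarrow> 'x) \<Rightarrow> ('f \<Rightarrow> 'f \<Rightarrow> 'f) \<Rightarrow> 'x \<Rightarrow>
   ('x \<Rightarrow> 'x \<Rightarrow> 'x \<Rightarrow> 'f) \<Rightarrow> ('x \<Rightarrow> 'f) \<Rightarrow> ('x \<Rightarrow> 'f) \<Rightarrow> bool" where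
  "skew_monoidal_category Ob Hom cp idt T Tm U alph lam rh \<longleftrightarrow>
     is_category Ob Hom cp idt \<and>
     \<comment> \<open>the tensor is a functor E x E -> E\<close>
     (\<forall>A\<in>Ob. \<forall>B\<in>Ob. T A B \<in> Ob) \<and>
     (\<forall>A\<in>Ob. \<forall>A'\<in>Ob. \<forall>B\<in>Ob. \<forall>B'\<in>Ob. \<forall>f\<in>Hom A A'. \<forall>g\<in>Hom B B'.
        Tm f g \<in> Hom (T A B) (T A' B')) \<and>
     (\<forall>A\<in>Ob. \<forall>B\<in>Ob. Tm (idt A) (idt B) = idt (T A B)) \<and>
     (\<forall>A\<in>Ob. \<forall>A'\<in>Ob. \<forall>A''\<in>Ob. \<forall>B\<in>Ob. \<forall>B'\<in>Ob. \<forall>B''\<in>Ob.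
        \<forall>f\<in>Hom A A'. \<forall>f'\<in>Hom A' A''. \<forall>g\<in>Hom B B'. \<forall>g'\<in>Hom B' B''.
        Tm (cp f' f) (cp g' g) = cp (Tm f' g') (Tm f g)) \<and>
     U \<in> Ob \<and>
     \<comment> \<open>components\<close>
     (\<forall>X\<in>Ob. \<forall>Y\<in>Ob. \<forall>Z\<in>Ob. alph X Y Z \<in> Hom (T (T X Y) Z) (T X (T Y Z))) \<and>
     (\<forall>X\<in>Ob. lam X \<in> Hom (T U X) X) \<and>
     (\<forall>X\<in>Ob. rh X \<in> Hom X (T X U)) \<and>
     \<comment> \<open>naturality\<close>
     (\<forall>X\<in>Ob. \<forall>X'\<in>Ob. \<forall>Y\<in>Ob. \<forall>Y'\<in>Ob. \<forall>Z\<in>Ob. \<forall>Z'\<in>Ob.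
        \<forall>f\<in>Hom X X'. \<forall>g\<in>Hom Y Y'. \<forall>h\<in>Hom Z Z'.
        cp (alph X' Y' Z') (Tm (Tm f g) h) = cp (Tm f (Tm g h)) (alph X Y Z)) \<and>
     (\<forall>X\<in>Ob. \<forall>X'\<in>Ob. \<forall>f\<in>Hom X X'. cp f (lam X) = cp (lam X') (Tm (idt U) f)) \<and>
     (\<forall>X\<in>Ob. \<forall>X'\<in>Ob. \<forall>f\<in>Hom X X'. cp (rh X') f = cp (Tm f (idt U)) (rh X)) \<and>
     \<comment> \<open>axioms\<close>
     cp (lam U) (rh U) = idt U \<and>
     (\<forall>X\<in>Ob. \<forall>Y\<in>Ob. cp (lam (T X Y)) (alph U X Y) = Tm (lam X) (idt Y)) \<and>
     (\<forall>X\<in>Ob. \<forall>Y\<in>Ob. cp (alph X Y U) (rh (T X Y)) = Tm (idt X) (rh Y)) \<and>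
     (\<forall>X\<in>Ob. \<forall>Y\<in>Ob.
        cp (cp (Tm (idt X) (lam Y)) (alph X U Y)) (Tm (rh X) (idt Y)) = idt (T X Y)) \<and>
     (\<forall>W\<in>Ob. \<forall>X\<in>Ob. \<forall>Y\<in>Ob. \<forall>Z\<in>Ob.
        cp (cp (Tm (idt W) (alph X Y Z)) (alph W (T X Y) Z)) (Tm (alph W X Y) (idt Z)) =
        cp (alph W X (T Y Z)) (alph (T W X) Y Z))"

text \<open>A universe of elements, closed under the constructions used: Base a for arbitrary
  elements (any set can be placed in the universe by choosing the type 'a), TObj u for
  elements of the unit U, and Tr x phi ys for the element (x, phi, y) of X * Y, where
  ys is the |d|-tuple (y_i)_{i<|d|} given as a list.\<close>
datatype ('a, 'o, 'm) elt =
    Base 'a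
  | TObj (el_obj: 'o)
  | Tr (el_x: "('a, 'o, 'm) elt") (el_mor: 'm) (el_ys: "('a, 'o, 'm) elt list")

text \<open>Objects of Set/C: a set X with partial_ : X -> C (extensional outside X).\<close>
type_synonym ('a, 'o, 'm) cobj = "('a, 'o, 'm) elt set \<times> (('a, 'o, 'm) elt \<Rightarrow> 'o)"
text \<open>Morphisms of Set/C: (source, underlying function, target).\<close>
type_synonym ('a, 'o, 'm) cmor =
  "('a, 'o, 'm) cobj \<times> (('a, 'o, 'm) elt \<Rightarrow> ('a, 'o, 'm) elt) \<times> ('a, 'o, 'm) cobj"

definition coll_obs :: "('o, 'm, 'z) opcat_scheme \<Rightarrow> ('a, 'o, 'm) cobj set" where
  "coll_obs C = {(X, d). d \<in> X \<rightarrow> obs C \<and> d \<in> extensional X}"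

definition coll_hom :: "('a, 'o, 'm) cobj \<Rightarrow> ('a, 'o, 'm) cobj \<Rightarrow> ('a, 'o, 'm) cmor set" where
  "coll_hom A B = {(A, f, B) | f. f \<in> fst A \<rightarrow> fst B \<and> f \<in> extensional (fst A) \<and>
                                 (\<forall>x\<in>fst A. snd B (f x) = snd A x)}"

definition coll_comp :: "('a, 'o, 'm) cmor \<Rightarrow> ('a, 'o, 'm) cmor \<Rightarrow> ('a, 'o, 'm) cmor" where
  "coll_comp G F = (fst F, restrict (fst (snd G) \<circ> fst (snd F)) (fst (fst F)), snd (snd G))"

definition coll_id :: "('a, 'o, 'm) cobj \<Rightarrow> ('a, 'o, 'm) cmor" where
  "coll_id A = (A, restrict (\<lambda>x. x) (fst A), A)"

definition tens_carrier ::
  "('o, 'm, 'z) opcat_scheme \<Rightarrow> ('a, 'o, 'm) cobj \<Rightarrow> ('a, 'o, 'm) cobj \<Rightarrow> ('a, 'o, 'm) elt set" where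
  "tens_carrier C A B =
     {Tr x \<phi> ys | x \<phi> ys. \<phi> \<in> mors C \<and> x \<in> fst A \<and> snd A x = tgt C \<phi> \<and>
        length ys = card_o C (tgt C \<phi>) \<and>
        (\<forall>i<length ys. ys ! i \<in> fst B \<and> snd B (ys ! i) = fibre C \<phi> i)}"

definition coll_tens ::
  "('o, 'm, 'z) opcat_scheme \<Rightarrow> ('a, 'o, 'm) cobj \<Rightarrow> ('a, 'o, 'm) cobj \<Rightarrow> ('a, 'o, 'm) cobj" where
  "coll_tens C A B = (tens_carrier C A B, restrict (\<lambda>e. src C (el_mor e)) (tens_carrier C A B))"

definition coll_tensm ::
  "('o, 'm, 'z) opcat_scheme \<Rightarrow> ('a, 'o, 'm) cmor \<Rightarrow> ('a, 'o, 'm) cmor \<Rightarrow> ('a, 'o, 'm) cmor" where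
  "coll_tensm C F G =
     (coll_tens C (fst F) (fst G),
      restrict (\<lambda>e. Tr (fst (snd F) (el_x e)) (el_mor e) (map (fst (snd G)) (el_ys e)))
               (tens_carrier C (fst F) (fst G)),
      coll_tens C (snd (snd F)) (snd (snd G)))"

definition coll_unit :: "('o, 'm, 'z) opcat_scheme \<Rightarrow> ('a, 'o, 'm) cobj" where
  "coll_unit C = ({TObj u | u. trivial_ob C u},
                  restrict el_obj {TObj u | u. trivial_ob C u})"

text \<open>alpha(x, psi, y, phi, z) = (x, psi phi, y, phi^psi, z): the j-th component is
  (y_j, phi^psi_j, (z_i)_{i in |psi^{-1} j|}).\<close>
definition coll_alpha ::
  "('o, 'm, 'z) opcat_scheme \<Rightarrow> ('a, 'o, 'm) cobj \<Rightarrow> ('a, 'o, 'm) cobj \<Rightarrow> ('a, 'o, 'm) cobj \<Rightarrow>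
   ('a, 'o, 'm) cmor" where
  "coll_alpha C X Y Z =
     (coll_tens C (coll_tens C X Y) Z,
      restrict (\<lambda>e. let \<phi> = el_mor e; zs = el_ys e; w = el_x e;
                         x = el_x w; \<psi> = el_mor w; ys = el_ys w in
                Tr x (cmp C \<psi> \<phi>)
                  (map (\<lambda>j. Tr (ys ! j) (fibre_m C \<phi> \<psi> j)
                               (map (\<lambda>i. zs ! i) (sfibl (card_m C \<psi>) (card_o C (src C \<psi>)) j)))
                       [0..<card_o C (tgt C \<psi>)]))
               (tens_carrier C (coll_tens C X Y) Z),
      coll_tens C X (coll_tens C Y Z))"

definition coll_lambda ::
  "('o, 'm, 'z) opcat_scheme \<Rightarrow> ('a, 'o, 'm) cobj \<Rightarrow> ('a, 'o, 'm) cmor" where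
  "coll_lambda C X =
     (coll_tens C (coll_unit C) X,
      restrict (\<lambda>e. el_ys e ! 0) (tens_carrier C (coll_unit C) X),
      X)"

definition coll_rho ::
  "('o, 'm, 'z) opcat_scheme \<Rightarrow> ('a, 'o, 'm) cobj \<Rightarrow> ('a, 'o, 'm) cmor" where
  "coll_rho C X =
     (X,
      restrict (\<lambda>x. Tr x (idm C (snd X x))
                       (map (\<lambda>i. TObj (fibre C (idm C (snd X x)) i)) [0..<card_o C (snd X x)]))
               (fst X),
      coll_tens C X (coll_unit C))"

end

theory Submission
  imports Defs
begin

lemma sfibl_nth:
  assumes "k < length (sfibl f n i)"
  shows "sfibl f n i ! k < n" "f (sfibl f n i ! k) = i"
proof -
  have "sfibl f n i ! k \<in> set (sfibl f n i)" using assms by simp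
  then show "sfibl f n i ! k < n" "f (sfibl f n i ! k) = i" by (auto simp: sfibl_def)
qed

lemma sfibl_split:
  assumes "j < n"
  shows "sfibl f n (f j) = filter (\<lambda>j'. f j' = f j) [0..<j] @ j # filter (\<lambda>j'. f j' = f j) [Suc j..<n]"
proof -
  have "[0..<n] = [0..<j] @ j # [Suc j..<n]" using assms
    by (metis le_add1 less_imp_le_nat upt_add_eq_append upt_conv_Cons add.commute le_add_diff_inverse2 zero_le)
  then show ?thesis unfolding sfibl_def by simp
qed

lemma sidx_sfibl:
  assumes "j < n"
  shows "sidx f j < length (sfibl f n (f j))" "sfibl f n (f j) ! sidx f j = j"
  using sfibl_split[OF assms, of f] unfolding sidx_def by (simp_all add: nth_append)

lemma sfibl_sidx:
  assumes "k < length (sfibl f n i)"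
  shows "sidx f (sfibl f n i ! k) = k"
proof -
  define j where "j = sfibl f n i ! k"
  have jn: "j < n" and fj: "f j = i" using sfibl_nth[OF assms] j_def by auto
  have d: "distinct (sfibl f n i)" by (simp add: sfibl_def)
  have "sfibl f n i ! sidx f j = j" "sidx f j < length (sfibl f n i)"
    using sidx_sfibl[OF jn, of f] fj by auto
  then show ?thesis using d assms j_def nth_eq_iff_index_eq by metis
qed

lemma sfibl_cong:
  assumes "\<And>k. k < n \<Longrightarrow> f k = g k"
  shows "sfibl f n i = sfibl g n i"
  unfolding sfibl_def using assms by (intro filter_cong) auto

lemma map_nth_filter:
  "map (\<lambda>m. L ! m) (filter (\<lambda>m. P (L ! m)) [0..<length L]) = filter P L"
proof (induction L rule: rev_induct)
  case Nil
  then show ?case by simp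
next
  case (snoc a L)
  have "filter (\<lambda>m. P ((L @ [a]) ! m)) [0..<length L] = filter (\<lambda>m. P (L ! m)) [0..<length L]"
    by (intro filter_cong) (auto simp: nth_append)
  moreover have "map (\<lambda>m. (L @ [a]) ! m) (filter (\<lambda>m. P (L ! m)) [0..<length L])
     = map (\<lambda>m. L ! m) (filter (\<lambda>m. P (L ! m)) [0..<length L])"
    by (intro map_cong) (auto simp: nth_append)
  ultimately show ?case using snoc by (simp add: nth_append)
qed


locale opc =
  fixes C :: "('o, 'm) opcat"
  assumes oc: "operadic_category C"
begin

lemma cat_ax: "is_cat C" using oc unfolding operadic_category_def by blast
lemma cf_ax: "card_functor C" using oc unfolding operadic_category_def by blast
lemma ff_ax: "fibre_functors C" using oc unfolding operadic_category_def by blast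
lemma fcc_ax: "fibre_card_compat C" using oc unfolding operadic_category_def by blast
lemma ds_ax: "double_slice C" using oc unfolding operadic_category_def by blast

lemma mors_src: "f \<in> mors C \<Longrightarrow> src C f \<in> obs C"
  using cat_ax unfolding is_cat_def by blast
lemma mors_tgt: "f \<in> mors C \<Longrightarrow> tgt C f \<in> obs C"
  using cat_ax unfolding is_cat_def by blast
lemma idm_mors: "a \<in> obs C \<Longrightarrow> idm C a \<in> mors C"
  using cat_ax unfolding is_cat_def by blast
lemma idm_src[simp]: "a \<in> obs C \<Longrightarrow> src C (idm C a) = a"
  using cat_ax unfolding is_cat_def by blast
lemma idm_tgt[simp]: "a \<in> obs C \<Longrightarrow> tgt C (idm C a) = a"
  using cat_ax unfolding is_cat_def by blast
lemma cmp_mors: "f \<in> mors C \<Longrightarrow> g \<in> mors C \<Longrightarrow> tgt C f = src C g \<Longrightarrow> cmp C g f \<in> mors C"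
  using cat_ax unfolding is_cat_def by blast
lemma cmp_src[simp]: "f \<in> mors C \<Longrightarrow> g \<in> mors C \<Longrightarrow> tgt C f = src C g \<Longrightarrow> src C (cmp C g f) = src C f"
  using cat_ax unfolding is_cat_def by blast
lemma cmp_tgt[simp]: "f \<in> mors C \<Longrightarrow> g \<in> mors C \<Longrightarrow> tgt C f = src C g \<Longrightarrow> tgt C (cmp C g f) = tgt C g"
  using cat_ax unfolding is_cat_def by blast
lemma cmp_assoc: "f \<in> mors C \<Longrightarrow> g \<in> mors C \<Longrightarrow> h \<in> mors C \<Longrightarrow> tgt C f = src C g \<Longrightarrow> tgt C g = src C h \<Longrightarrow>
   cmp C h (cmp C g f) = cmp C (cmp C h g) f"
  using cat_ax unfolding is_cat_def by blast
lemma cmp_idl: "f \<in> mors C \<Longrightarrow> cmp C (idm C (tgt C f)) f = f"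
  using cat_ax unfolding is_cat_def by blast
lemma cmp_idr: "f \<in> mors C \<Longrightarrow> cmp C f (idm C (src C f)) = f"
  using cat_ax unfolding is_cat_def by blast

lemma card_m_lt: "f \<in> mors C \<Longrightarrow> k < card_o C (src C f) \<Longrightarrow> card_m C f k < card_o C (tgt C f)"
  using cf_ax unfolding card_functor_def by blast
lemma card_m_idm: "a \<in> obs C \<Longrightarrow> k < card_o C a \<Longrightarrow> card_m C (idm C a) k = k"
  using cf_ax unfolding card_functor_def by blast
lemma card_m_cmp: "f \<in> mors C \<Longrightarrow> g \<in> mors C \<Longrightarrow> tgt C f = src C g \<Longrightarrow> k < card_o C (src C f) \<Longrightarrow>
   card_m C (cmp C g f) k = card_m C g (card_m C f k)"
  using cf_ax unfolding card_functor_def by blast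

lemma fibre_obs: "\<psi> \<in> mors C \<Longrightarrow> i < card_o C (tgt C \<psi>) \<Longrightarrow> fibre C \<psi> i \<in> obs C"
  using ff_ax unfolding fibre_functors_def by blast
lemma fibre_m_mors: "\<phi> \<in> mors C \<Longrightarrow> \<psi> \<in> mors C \<Longrightarrow> tgt C \<phi> = src C \<psi> \<Longrightarrow> i < card_o C (tgt C \<psi>) \<Longrightarrow>
   fibre_m C \<phi> \<psi> i \<in> mors C"
  using ff_ax unfolding fibre_functors_def by blast
lemma fibre_m_src[simp]: "\<phi> \<in> mors C \<Longrightarrow> \<psi> \<in> mors C \<Longrightarrow> tgt C \<phi> = src C \<psi> \<Longrightarrow> i < card_o C (tgt C \<psi>) \<Longrightarrow>
   src C (fibre_m C \<phi> \<psi> i) = fibre C (cmp C \<psi> \<phi>) i"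
  using ff_ax unfolding fibre_functors_def by blast
lemma fibre_m_tgt[simp]: "\<phi> \<in> mors C \<Longrightarrow> \<psi> \<in> mors C \<Longrightarrow> tgt C \<phi> = src C \<psi> \<Longrightarrow> i < card_o C (tgt C \<psi>) \<Longrightarrow>
   tgt C (fibre_m C \<phi> \<psi> i) = fibre C \<psi> i"
  using ff_ax unfolding fibre_functors_def by blast
lemma fibre_m_idm: "\<psi> \<in> mors C \<Longrightarrow> i < card_o C (tgt C \<psi>) \<Longrightarrow>
   fibre_m C (idm C (src C \<psi>)) \<psi> i = idm C (fibre C \<psi> i)"
  using ff_ax unfolding fibre_functors_def by blast
lemma fibre_m_cmp: "\<phi>1 \<in> mors C \<Longrightarrow> \<phi>2 \<in> mors C \<Longrightarrow> \<psi> \<in> mors C \<Longrightarrow>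
   tgt C \<phi>1 = src C \<phi>2 \<Longrightarrow> tgt C \<phi>2 = src C \<psi> \<Longrightarrow> i < card_o C (tgt C \<psi>) \<Longrightarrow>
   fibre_m C (cmp C \<phi>2 \<phi>1) \<psi> i = cmp C (fibre_m C \<phi>2 \<psi> i) (fibre_m C \<phi>1 (cmp C \<psi> \<phi>2) i)"
  using ff_ax unfolding fibre_functors_def by blast

lemma card_fibre: "\<psi> \<in> mors C \<Longrightarrow> i < card_o C (tgt C \<psi>) \<Longrightarrow>
   card_o C (fibre C \<psi> i) = length (sfibl (card_m C \<psi>) (card_o C (src C \<psi>)) i)"
  using fcc_ax unfolding fibre_card_compat_def by blast
lemma card_m_fibre_m: "\<phi> \<in> mors C \<Longrightarrow> \<psi> \<in> mors C \<Longrightarrow> tgt C \<phi> = src C \<psi> \<Longrightarrow> i < card_o C (tgt C \<psi>) \<Longrightarrow>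
   k < card_o C (fibre C (cmp C \<psi> \<phi>) i) \<Longrightarrow>
   card_m C (fibre_m C \<phi> \<psi> i) k =
     sidx (card_m C \<psi>) (card_m C \<phi> (sfibl (card_m C (cmp C \<psi> \<phi>)) (card_o C (src C \<phi>)) i ! k))"
  using fcc_ax unfolding fibre_card_compat_def by blast

lemma triv_idm: "a \<in> obs C \<Longrightarrow> i < card_o C a \<Longrightarrow> trivial_ob C (fibre C (idm C a) i)"
  using oc unfolding operadic_category_def by blast

lemma ds_ob: "\<phi> \<in> mors C \<Longrightarrow> \<psi> \<in> mors C \<Longrightarrow> tgt C \<phi> = src C \<psi> \<Longrightarrow> k < card_o C (src C \<psi>) \<Longrightarrow>
   fibre C \<phi> k = fibre C (fibre_m C \<phi> \<psi> (card_m C \<psi> k)) (sidx (card_m C \<psi>) k)"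
  using ds_ax unfolding double_slice_def by blast
lemma ds_mor: "\<sigma> \<in> mors C \<Longrightarrow> \<phi> \<in> mors C \<Longrightarrow> \<psi> \<in> mors C \<Longrightarrow> tgt C \<sigma> = src C \<phi> \<Longrightarrow> tgt C \<phi> = src C \<psi> \<Longrightarrow>
   k < card_o C (src C \<psi>) \<Longrightarrow>
   fibre_m C \<sigma> \<phi> k =
     fibre_m C (fibre_m C \<sigma> (cmp C \<psi> \<phi>) (card_m C \<psi> k)) (fibre_m C \<phi> \<psi> (card_m C \<psi> k)) (sidx (card_m C \<psi>) k)"
  using ds_ax unfolding double_slice_def by blast

lemma triv_fibre: "trivial_ob C u \<Longrightarrow> f \<in> mors C \<Longrightarrow> tgt C f = u \<Longrightarrow> fibre C f 0 = src C f"
  unfolding trivial_ob_def by blast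
lemma triv_fibre_m: "trivial_ob C u \<Longrightarrow> \<phi> \<in> mors C \<Longrightarrow> f \<in> mors C \<Longrightarrow> tgt C \<phi> = src C f \<Longrightarrow> tgt C f = u \<Longrightarrow>
  fibre_m C \<phi> f 0 = \<phi>"
  unfolding trivial_ob_def by blast
lemma triv_card: "trivial_ob C u \<Longrightarrow> card_o C u = 1"
  unfolding trivial_ob_def by blast
lemma triv_obs: "trivial_ob C u \<Longrightarrow> u \<in> obs C"
  unfolding trivial_ob_def by blast

end

lemma homE:
  assumes "F \<in> coll_hom A B"
  obtains f where "F = (A, f, B)" "f \<in> fst A \<rightarrow> fst B" "f \<in> extensional (fst A)"
    "\<And>x. x \<in> fst A \<Longrightarrow> snd B (f x) = snd A x"
  using assms unfolding coll_hom_def by auto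

lemma hom_app:
  assumes "F \<in> coll_hom A B" "x \<in> fst A"
  shows "fst (snd F) x \<in> fst B" "snd B (fst (snd F) x) = snd A x"
  using assms by (auto elim!: homE)

lemma hom_eqI:
  assumes "F \<in> coll_hom A B" "G \<in> coll_hom A B" "\<And>x. x \<in> fst A \<Longrightarrow> fst (snd F) x = fst (snd G) x"
  shows "F = G"
proof -
  obtain f where f: "F = (A, f, B)" "f \<in> extensional (fst A)" using assms(1) by (auto elim!: homE)
  obtain g where g: "G = (A, g, B)" "g \<in> extensional (fst A)" using assms(2) by (auto elim!: homE)
  have "f = g" using f g assms(3) by (intro extensionalityI[of _ "fst A"]) auto
  then show ?thesis using f g by simp
qed

lemma homI:
  assumes "\<And>x. x \<in> fst A \<Longrightarrow> f x \<in> fst B" "\<And>x. x \<in> fst A \<Longrightarrow> snd B (f x) = snd A x"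
  shows "(A, restrict f (fst A), B) \<in> coll_hom A B"
  unfolding coll_hom_def using assms by auto

lemma comp_hom:
  assumes "F \<in> coll_hom A B" "G \<in> coll_hom B D"
  shows "coll_comp G F \<in> coll_hom A D"
proof -
  obtain f where f: "F = (A, f, B)" using assms(1) by (auto elim!: homE)
  obtain g where g: "G = (B, g, D)" using assms(2) by (auto elim!: homE)
  have "coll_comp G F = (A, restrict (g \<circ> f) (fst A), D)"
    unfolding coll_comp_def f g by simp
  moreover have "\<And>x. x \<in> fst A \<Longrightarrow> g (f x) \<in> fst D \<and> snd D (g (f x)) = snd A x"
    using hom_app[OF assms(1)] hom_app[OF assms(2)] f g by fastforce
  ultimately show ?thesis by (auto intro!: homI)
qed

lemma comp_app:
  assumes "F \<in> coll_hom A B" "x \<in> fst A"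
  shows "fst (snd (coll_comp G F)) x = fst (snd G) (fst (snd F) x)"
  using assms unfolding coll_comp_def by (auto elim!: homE)

lemma id_hom: "coll_id A \<in> coll_hom A A"
  unfolding coll_id_def by (rule homI) auto

lemma id_app: "x \<in> fst A \<Longrightarrow> fst (snd (coll_id A)) x = x"
  unfolding coll_id_def by simp

lemma tens_mem:
  "Tr x \<phi> ys \<in> tens_carrier C A B \<longleftrightarrow> \<phi> \<in> mors C \<and> x \<in> fst A \<and> snd A x = tgt C \<phi> \<and>
        length ys = card_o C (tgt C \<phi>) \<and>
        (\<forall>i<length ys. ys ! i \<in> fst B \<and> snd B (ys ! i) = fibre C \<phi> i)"
  unfolding tens_carrier_def by auto

lemma tens_cases:
  assumes "e \<in> tens_carrier C A B"
  obtains x \<phi> ys where "e = Tr x \<phi> ys" "Tr x \<phi> ys \<in> tens_carrier C A B"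
  using assms unfolding tens_carrier_def by auto

lemma tens_fst[simp]: "fst (coll_tens C A B) = tens_carrier C A B"
  unfolding coll_tens_def by simp

lemma tens_snd[simp]: "Tr x \<phi> ys \<in> tens_carrier C A B \<Longrightarrow> snd (coll_tens C A B) (Tr x \<phi> ys) = src C \<phi>"
  unfolding coll_tens_def by simp

lemma tensm_hom:
  assumes F: "F \<in> coll_hom A A'" and G: "G \<in> coll_hom B B'"
  shows "coll_tensm C F G \<in> coll_hom (coll_tens C A B) (coll_tens C A' B')"
proof -
  have e: "coll_tensm C F G = (coll_tens C A B,
      restrict (\<lambda>e. Tr (fst (snd F) (el_x e)) (el_mor e) (map (fst (snd G)) (el_ys e))) (tens_carrier C A B),
      coll_tens C A' B')"
    using F G unfolding coll_tensm_def by (auto elim!: homE)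
  show ?thesis unfolding e tens_fst[symmetric]
  proof (rule homI)
    fix e assume "e \<in> fst (coll_tens C A B)"
    then obtain x \<phi> ys where e: "e = Tr x \<phi> ys" and m: "Tr x \<phi> ys \<in> tens_carrier C A B"
      by (auto elim: tens_cases)
    show "Tr (fst (snd F) (el_x e)) (el_mor e) (map (fst (snd G)) (el_ys e)) \<in> fst (coll_tens C A' B')"
      using m F G by (auto simp: e tens_mem hom_app)
    then show "snd (coll_tens C A' B') (Tr (fst (snd F) (el_x e)) (el_mor e) (map (fst (snd G)) (el_ys e))) =
         snd (coll_tens C A B) e"
      using m by (simp add: e)
  qed
qed

lemma tensm_app:
  assumes F: "F \<in> coll_hom A A'" and G: "G \<in> coll_hom B B'" and m: "Tr x \<phi> ys \<in> tens_carrier C A B"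
  shows "fst (snd (coll_tensm C F G)) (Tr x \<phi> ys) = Tr (fst (snd F) x) \<phi> (map (fst (snd G)) ys)"
  using F G m unfolding coll_tensm_def by (auto elim!: homE)

lemma unit_mem: "x \<in> fst (coll_unit C) \<longleftrightarrow> (\<exists>u. x = TObj u \<and> trivial_ob C u)"
  unfolding coll_unit_def by auto

lemma unit_mem'[simp]: "TObj u \<in> fst (coll_unit C) \<longleftrightarrow> trivial_ob C u"
  unfolding coll_unit_def by auto

lemma unit_snd[simp]: "trivial_ob C u \<Longrightarrow> snd (coll_unit C) (TObj u) = u"
  unfolding coll_unit_def by auto


context opc begin

lemma tens_cases2:
  assumes "e \<in> fst (coll_tens C A B)"
  obtains x \<phi> ys where "e = Tr x \<phi> ys" "Tr x \<phi> ys \<in> tens_carrier C A B"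
proof -
  have "e \<in> tens_carrier C A B" using assms by simp
  then show ?thesis by (rule tens_cases) (rule that)
qed

lemma tens_obs: "coll_tens C A B \<in> coll_obs C"
proof -
  have "src C (el_mor e) \<in> obs C" if "e \<in> tens_carrier C A B" for e
  proof -
    obtain x \<phi> ys where "e = Tr x \<phi> ys" "Tr x \<phi> ys \<in> tens_carrier C A B" using \<open>e \<in> tens_carrier C A B\<close> by (rule tens_cases)
    then show ?thesis by (simp add: tens_mem mors_src)
  qed
  then show ?thesis unfolding coll_obs_def coll_tens_def by auto
qed

lemma unit_obs: "coll_unit C \<in> coll_obs C"
  unfolding coll_obs_def coll_unit_def by (auto simp: triv_obs)

lemma tens_memI:
  assumes "\<phi> \<in> mors C" "x \<in> fst A" "snd A x = tgt C \<phi>" "length ys = card_o C (tgt C \<phi>)"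
    "\<And>i. i < length ys \<Longrightarrow> ys ! i \<in> fst B" "\<And>i. i < length ys \<Longrightarrow> snd B (ys ! i) = fibre C \<phi> i"
  shows "Tr x \<phi> ys \<in> tens_carrier C A B"
  using assms by (simp add: tens_mem)

lemma alpha_app:
  assumes "Tr (Tr x \<psi> ys) \<phi> zs \<in> tens_carrier C (coll_tens C X Y) Z"
  shows "fst (snd (coll_alpha C X Y Z)) (Tr (Tr x \<psi> ys) \<phi> zs) =
    Tr x (cmp C \<psi> \<phi>)
      (map (\<lambda>j. Tr (ys ! j) (fibre_m C \<phi> \<psi> j)
                  (map (\<lambda>i. zs ! i) (sfibl (card_m C \<psi>) (card_o C (src C \<psi>)) j)))
           [0..<card_o C (tgt C \<psi>)])"
  using assms unfolding coll_alpha_def by (simp add: Let_def)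

lemma alpha_elt:
  assumes "Tr (Tr x \<psi> ys) \<phi> zs \<in> tens_carrier C (coll_tens C X Y) Z"
  shows "\<phi> \<in> mors C" "\<psi> \<in> mors C" "x \<in> fst X" "snd X x = tgt C \<psi>" "tgt C \<phi> = src C \<psi>"
    "length ys = card_o C (tgt C \<psi>)" "\<And>j. j < length ys \<Longrightarrow> ys ! j \<in> fst Y \<and> snd Y (ys ! j) = fibre C \<psi> j"
    "length zs = card_o C (src C \<psi>)" "\<And>i. i < length zs \<Longrightarrow> zs ! i \<in> fst Z \<and> snd Z (zs ! i) = fibre C \<phi> i"
    "Tr x \<psi> ys \<in> tens_carrier C X Y"
proof -
  have m1: "\<phi> \<in> mors C" "Tr x \<psi> ys \<in> tens_carrier C X Y" "src C \<psi> = tgt C \<phi>"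
      "length zs = card_o C (tgt C \<phi>)" "\<And>i. i < length zs \<Longrightarrow> zs ! i \<in> fst Z \<and> snd Z (zs ! i) = fibre C \<phi> i"
    using assms by (auto simp: tens_mem)
  then show "\<phi> \<in> mors C" "tgt C \<phi> = src C \<psi>" "length zs = card_o C (src C \<psi>)"
    "\<And>i. i < length zs \<Longrightarrow> zs ! i \<in> fst Z \<and> snd Z (zs ! i) = fibre C \<phi> i"
    "Tr x \<psi> ys \<in> tens_carrier C X Y" by auto
  show "\<psi> \<in> mors C" "x \<in> fst X" "snd X x = tgt C \<psi>"
    "length ys = card_o C (tgt C \<psi>)" "\<And>j. j < length ys \<Longrightarrow> ys ! j \<in> fst Y \<and> snd Y (ys ! j) = fibre C \<psi> j"
    using m1(2) by (auto simp: tens_mem)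
qed

lemma alpha_img:
  assumes m: "Tr (Tr x \<psi> ys) \<phi> zs \<in> tens_carrier C (coll_tens C X Y) Z"
  shows "Tr x (cmp C \<psi> \<phi>)
      (map (\<lambda>j. Tr (ys ! j) (fibre_m C \<phi> \<psi> j)
                  (map (\<lambda>i. zs ! i) (sfibl (card_m C \<psi>) (card_o C (src C \<psi>)) j)))
           [0..<card_o C (tgt C \<psi>)]) \<in> tens_carrier C X (coll_tens C Y Z)"
proof -
  note E = alpha_elt[OF m]
  let ?S = "\<lambda>j. sfibl (card_m C \<psi>) (card_o C (src C \<psi>)) j"
  have comp: "Tr (ys ! j) (fibre_m C \<phi> \<psi> j) (map (\<lambda>i. zs ! i) (?S j)) \<in> tens_carrier C Y Z"
    if j: "j < card_o C (tgt C \<psi>)" for j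
  proof -
    have fm: "fibre_m C \<phi> \<psi> j \<in> mors C" "tgt C (fibre_m C \<phi> \<psi> j) = fibre C \<psi> j"
      using E j by (auto intro: fibre_m_mors)
    have len: "length (?S j) = card_o C (fibre C \<psi> j)" using card_fibre E j by simp
    have el: "zs ! (?S j ! k) \<in> fst Z \<and> snd Z (zs ! (?S j ! k)) = fibre C (fibre_m C \<phi> \<psi> j) k"
      if k: "k < length (?S j)" for k
    proof -
      have a: "?S j ! k < card_o C (src C \<psi>)" "card_m C \<psi> (?S j ! k) = j" "sidx (card_m C \<psi>) (?S j ! k) = k"
        using sfibl_nth[OF k] sfibl_sidx[OF k] by auto
      have "fibre C \<phi> (?S j ! k) = fibre C (fibre_m C \<phi> \<psi> j) k"
        using ds_ob[of \<phi> \<psi> "?S j ! k"] E a by simp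
      then show ?thesis using E(8,9) a by auto
    qed
    show ?thesis
      by (rule tens_memI) (use fm len el E j in auto)
  qed
  show ?thesis
  proof (rule tens_memI)
    show "cmp C \<psi> \<phi> \<in> mors C" using E by (simp add: cmp_mors)
  next
    fix j assume "j < length (map (\<lambda>j. Tr (ys ! j) (fibre_m C \<phi> \<psi> j) (map (\<lambda>i. zs ! i) (?S j))) [0..<card_o C (tgt C \<psi>)])"
    then have j: "j < card_o C (tgt C \<psi>)" by simp
    show "map (\<lambda>j. Tr (ys ! j) (fibre_m C \<phi> \<psi> j) (map (\<lambda>i. zs ! i) (?S j))) [0..<card_o C (tgt C \<psi>)] ! j \<in> fst (coll_tens C Y Z)"
      using comp[OF j] j by simp
    show "snd (coll_tens C Y Z) (map (\<lambda>j. Tr (ys ! j) (fibre_m C \<phi> \<psi> j) (map (\<lambda>i. zs ! i) (?S j))) [0..<card_o C (tgt C \<psi>)] ! j) = fibre C (cmp C \<psi> \<phi>) j"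
      using comp[OF j] j E by simp
  qed (use E in auto)
qed

lemma alpha_hom: "coll_alpha C X Y Z \<in> coll_hom (coll_tens C (coll_tens C X Y) Z) (coll_tens C X (coll_tens C Y Z))"
proof -
  have e: "coll_alpha C X Y Z = (coll_tens C (coll_tens C X Y) Z,
      restrict (fst (snd (coll_alpha C X Y Z))) (fst (coll_tens C (coll_tens C X Y) Z)),
      coll_tens C X (coll_tens C Y Z))"
    unfolding coll_alpha_def by simp
  show ?thesis
  proof (subst e, rule homI)
    fix e assume "e \<in> fst (coll_tens C (coll_tens C X Y) Z)"
    then obtain w \<phi> zs where e1: "e = Tr w \<phi> zs" and m0: "Tr w \<phi> zs \<in> tens_carrier C (coll_tens C X Y) Z"
      by (rule tens_cases2)
    then have "w \<in> tens_carrier C X Y" by (auto simp: tens_mem)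
    then obtain x \<psi> ys where w: "w = Tr x \<psi> ys" by (auto simp: tens_carrier_def)
    note m = m0[unfolded w]
    show "fst (snd (coll_alpha C X Y Z)) e \<in> fst (coll_tens C X (coll_tens C Y Z))"
      using alpha_img[OF m] by (simp add: e1 w alpha_app[OF m])
    then show "snd (coll_tens C X (coll_tens C Y Z)) (fst (snd (coll_alpha C X Y Z)) e) =
         snd (coll_tens C (coll_tens C X Y) Z) e"
      using alpha_elt[OF m] alpha_img[OF m] m by (simp add: e1 w alpha_app[OF m])
  qed
qed

lemma lambda_hom: "coll_lambda C X \<in> coll_hom (coll_tens C (coll_unit C) X) X"
  unfolding coll_lambda_def tens_fst[symmetric]
proof (rule homI)
  fix e assume "e \<in> fst (coll_tens C (coll_unit C) X)"
  then obtain u \<phi> ys where e: "e = Tr u \<phi> ys" and m: "Tr u \<phi> ys \<in> tens_carrier C (coll_unit C) X"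
    by (rule tens_cases2)
  then obtain v where v: "u = TObj v" "trivial_ob C v" by (auto simp: tens_mem unit_mem)
  then have "length ys = 1" "\<phi> \<in> mors C" "tgt C \<phi> = v" using m by (auto simp: tens_mem triv_card)
  then show "el_ys e ! 0 \<in> fst X" "snd X (el_ys e ! 0) = snd (coll_tens C (coll_unit C) X) e"
    using m v triv_fibre[of v \<phi>] tens_snd[OF m] by (auto simp: tens_mem e)
qed

lemma lambda_app: "Tr u \<phi> ys \<in> tens_carrier C (coll_unit C) X \<Longrightarrow> fst (snd (coll_lambda C X)) (Tr u \<phi> ys) = ys ! 0"
  unfolding coll_lambda_def by simp

lemma rho_img:
  assumes X: "X \<in> coll_obs C" and x: "x \<in> fst X"
  shows "Tr x (idm C (snd X x)) (map (\<lambda>i. TObj (fibre C (idm C (snd X x)) i)) [0..<card_o C (snd X x)])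
     \<in> tens_carrier C X (coll_unit C)"
proof -
  have a: "snd X x \<in> obs C" using X x unfolding coll_obs_def by auto
  show ?thesis using a x by (auto simp: tens_mem idm_mors triv_idm)
qed

lemma rho_hom: assumes X: "X \<in> coll_obs C" shows "coll_rho C X \<in> coll_hom X (coll_tens C X (coll_unit C))"
  unfolding coll_rho_def
proof (rule homI)
  fix x assume x: "x \<in> fst X"
  have a: "snd X x \<in> obs C" using X x unfolding coll_obs_def by auto
  show "Tr x (idm C (snd X x)) (map (\<lambda>i. TObj (fibre C (idm C (snd X x)) i)) [0..<card_o C (snd X x)])
     \<in> fst (coll_tens C X (coll_unit C))" using rho_img[OF X x] by simp
  then show "snd (coll_tens C X (coll_unit C)) (Tr x (idm C (snd X x)) (map (\<lambda>i. TObj (fibre C (idm C (snd X x)) i)) [0..<card_o C (snd X x)])) = snd X x"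
    using a by simp
qed

lemma rho_app: "x \<in> fst X \<Longrightarrow> fst (snd (coll_rho C X)) x =
   Tr x (idm C (snd X x)) (map (\<lambda>i. TObj (fibre C (idm C (snd X x)) i)) [0..<card_o C (snd X x)])"
  unfolding coll_rho_def by simp

end

lemma tensm_app':
  assumes F: "F \<in> coll_hom A A'" and G: "G \<in> coll_hom B B'" and m: "e \<in> tens_carrier C A B"
  shows "fst (snd (coll_tensm C F G)) e = Tr (fst (snd F) (el_x e)) (el_mor e) (map (fst (snd G)) (el_ys e))"
  using F G m unfolding coll_tensm_def by (auto elim!: homE)

lemma tens_cases3:
  assumes "e \<in> fst (coll_tens C A B)"
  obtains x \<phi> ys where "e = Tr x \<phi> ys" "Tr x \<phi> ys \<in> tens_carrier C A B"
proof -
  have "e \<in> tens_carrier C A B" using assms by simp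
  then show ?thesis by (rule tens_cases) (rule that)
qed

lemma coll_is_category: "is_category (coll_obs C) coll_hom coll_comp coll_id"
  unfolding is_category_def
proof (intro conjI ballI)
  fix A assume "A \<in> coll_obs C" show "coll_id A \<in> coll_hom A A" by (rule id_hom)
next
  fix A B D f g assume "f \<in> coll_hom A B" "g \<in> coll_hom B D"
  then show "coll_comp g f \<in> coll_hom A D" by (rule comp_hom)
next
  fix A B f assume f: "f \<in> coll_hom A B"
  show "coll_comp (coll_id B) f = f"
    by (rule hom_eqI[OF comp_hom[OF f id_hom] f]) (simp add: comp_app[OF f] id_app hom_app[OF f])
  show "coll_comp f (coll_id A) = f"
    by (rule hom_eqI[OF comp_hom[OF id_hom f] f]) (simp add: comp_app[OF id_hom] id_app)
next
  fix A B D E f g h assume f: "f \<in> coll_hom A B" and g: "g \<in> coll_hom B D" and h: "h \<in> coll_hom D E"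
  show "coll_comp h (coll_comp g f) = coll_comp (coll_comp h g) f"
    by (rule hom_eqI[OF comp_hom[OF comp_hom[OF f g] h] comp_hom[OF f comp_hom[OF g h]]])
       (simp add: comp_app[OF comp_hom[OF f g]] comp_app[OF f] comp_app[OF g] hom_app[OF f])
qed

lemma tensm_id: "coll_tensm C (coll_id A) (coll_id B) = coll_id (coll_tens C A B)"
proof (rule hom_eqI[OF tensm_hom[OF id_hom id_hom] id_hom])
  fix e assume "e \<in> fst (coll_tens C A B)"
  then obtain x \<phi> ys where e: "e = Tr x \<phi> ys" and m: "Tr x \<phi> ys \<in> tens_carrier C A B"
    by (rule tens_cases3)
  have "map (fst (snd (coll_id B))) ys = ys"
  proof (rule map_idI)
    fix y assume "y \<in> set ys"
    then obtain i where "i < length ys" "y = ys ! i" by (auto simp: in_set_conv_nth)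
    then show "fst (snd (coll_id B)) y = y" using m by (auto simp: tens_mem id_app)
  qed
  then show "fst (snd (coll_tensm C (coll_id A) (coll_id B))) e = fst (snd (coll_id (coll_tens C A B))) e"
    using m by (simp add: e tensm_app[OF id_hom id_hom m] id_app tens_mem)
qed

lemma tensm_comp:
  assumes f: "f \<in> coll_hom A A'" and f': "f' \<in> coll_hom A' A''"
    and g: "g \<in> coll_hom B B'" and g': "g' \<in> coll_hom B' B''"
  shows "coll_tensm C (coll_comp f' f) (coll_comp g' g) = coll_comp (coll_tensm C f' g') (coll_tensm C f g)"
proof (rule hom_eqI[OF tensm_hom[OF comp_hom[OF f f'] comp_hom[OF g g']]
      comp_hom[OF tensm_hom[OF f g] tensm_hom[OF f' g']]])
  fix e assume "e \<in> fst (coll_tens C A B)"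
  then obtain x \<phi> ys where e: "e = Tr x \<phi> ys" and m: "Tr x \<phi> ys \<in> tens_carrier C A B"
    by (rule tens_cases3)
  have m2: "fst (snd (coll_tensm C f g)) e \<in> tens_carrier C A' B'"
    using hom_app(1)[OF tensm_hom[OF f g], of e] m e by simp
  have ys: "\<And>y. y \<in> set ys \<Longrightarrow> y \<in> fst B" using m by (auto simp: tens_mem in_set_conv_nth)
  have x: "x \<in> fst A" using m by (simp add: tens_mem)
  show "fst (snd (coll_tensm C (coll_comp f' f) (coll_comp g' g))) e =
        fst (snd (coll_comp (coll_tensm C f' g') (coll_tensm C f g))) e"
    using m2 unfolding e
    by (simp add: comp_app[OF tensm_hom[OF f g]] m tensm_app[OF f g m] tensm_app[OF f' g']
        tensm_app[OF comp_hom[OF f f'] comp_hom[OF g g'] m] comp_app[OF f x] comp_app[OF g] ys)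
qed


lemma sfibl_id: "j < n \<Longrightarrow> sfibl (\<lambda>k. k) n j = [j]"
proof (induction n)
  case 0 then show ?case by simp
next
  case (Suc n)
  show ?case
  proof (cases "j < n")
    case True
    then show ?thesis using Suc by (simp add: sfibl_def)
  next
    case False
    then have "j = n" using Suc by simp
    moreover have "filter (\<lambda>k. k = n) [0..<n] = []" by (simp add: filter_empty_conv)
    ultimately show ?thesis by (simp add: sfibl_def)
  qed
qed

context opc begin

lemma sfibl_idm: "a \<in> obs C \<Longrightarrow> j < card_o C a \<Longrightarrow> sfibl (card_m C (idm C a)) (card_o C a) j = [j]"
  using sfibl_cong[of "card_o C a" "card_m C (idm C a)" "\<lambda>k. k" j] card_m_idm sfibl_id by simp

lemma pent_list:
  assumes \<chi>: "\<chi> \<in> mors C" and \<psi>: "\<psi> \<in> mors C" and t: "tgt C \<psi> = src C \<chi>"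
    and k: "k < card_o C (tgt C \<chi>)"
    and l: "l < length (sfibl (card_m C \<chi>) (card_o C (src C \<chi>)) k)"
  shows "map (\<lambda>m. sfibl (card_m C (cmp C \<chi> \<psi>)) (card_o C (src C \<psi>)) k ! m)
           (sfibl (card_m C (fibre_m C \<psi> \<chi> k)) (length (sfibl (card_m C (cmp C \<chi> \<psi>)) (card_o C (src C \<psi>)) k)) l)
         = sfibl (card_m C \<psi>) (card_o C (src C \<psi>)) (sfibl (card_m C \<chi>) (card_o C (src C \<chi>)) k ! l)"
proof -
  define L where "L = sfibl (card_m C (cmp C \<chi> \<psi>)) (card_o C (src C \<psi>)) k"
  define n1 where "n1 = card_o C (src C \<psi>)"
  define n2 where "n2 = card_o C (src C \<chi>)"
  define j where "j = sfibl (card_m C \<chi>) n2 k ! l"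
  have l': "l < length (sfibl (card_m C \<chi>) n2 k)" using l n2_def by simp
  have j: "j < n2" "card_m C \<chi> j = k" "sidx (card_m C \<chi>) j = l"
    using sfibl_nth[OF l'] sfibl_sidx[OF l'] j_def by auto
  have lenL: "length L = card_o C (fibre C (cmp C \<chi> \<psi>) k)"
    using card_fibre[of "cmp C \<chi> \<psi>" k] \<chi> \<psi> t k L_def by (simp add: cmp_mors)
  have g: "card_m C (fibre_m C \<psi> \<chi> k) m = sidx (card_m C \<chi>) (card_m C \<psi> (L ! m))" if "m < length L" for m
    using card_m_fibre_m[of \<psi> \<chi> k m] \<chi> \<psi> t k that lenL L_def by simp
  have "sfibl (card_m C (fibre_m C \<psi> \<chi> k)) (length L) l
      = filter (\<lambda>m. sidx (card_m C \<chi>) (card_m C \<psi> (L ! m)) = l) [0..<length L]"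
    unfolding sfibl_def using g by (intro filter_cong) auto
  then have "map (\<lambda>m. L ! m) (sfibl (card_m C (fibre_m C \<psi> \<chi> k)) (length L) l)
      = filter (\<lambda>i. sidx (card_m C \<chi>) (card_m C \<psi> i) = l) L"
    using map_nth_filter[of L "\<lambda>i. sidx (card_m C \<chi>) (card_m C \<psi> i) = l"] by simp
  also have "\<dots> = filter (\<lambda>i. card_m C (cmp C \<chi> \<psi>) i = k \<and> sidx (card_m C \<chi>) (card_m C \<psi> i) = l) [0..<n1]"
    unfolding L_def sfibl_def n1_def by (simp add: filter_filter)
  also have "\<dots> = filter (\<lambda>i. card_m C \<psi> i = j) [0..<n1]"
  proof (intro filter_cong refl)
    fix i assume "i \<in> set [0..<n1]"
    then have i: "i < n1" by simp
    have c: "card_m C (cmp C \<chi> \<psi>) i = card_m C \<chi> (card_m C \<psi> i)"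
      using card_m_cmp[of \<psi> \<chi> i] \<chi> \<psi> t i n1_def by simp
    have a: "card_m C \<psi> i < n2" using card_m_lt[of \<psi> i] \<psi> t i n1_def n2_def by simp
    show "(card_m C (cmp C \<chi> \<psi>) i = k \<and> sidx (card_m C \<chi>) (card_m C \<psi> i) = l) = (card_m C \<psi> i = j)"
    proof
      assume h: "card_m C (cmp C \<chi> \<psi>) i = k \<and> sidx (card_m C \<chi>) (card_m C \<psi> i) = l"
      have "sfibl (card_m C \<chi>) n2 (card_m C \<chi> (card_m C \<psi> i)) ! sidx (card_m C \<chi>) (card_m C \<psi> i) = card_m C \<psi> i"
        using sidx_sfibl(2)[OF a] by simp
      then show "card_m C \<psi> i = j" using h c j_def by simp
    qed (use c j in simp)
  qed
  finally show ?thesis unfolding L_def n1_def j_def n2_def sfibl_def by simp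
qed

end

context opc begin

lemma lambda_nat:
  assumes f: "f \<in> coll_hom X X'"
  shows "coll_comp f (coll_lambda C X) = coll_comp (coll_lambda C X') (coll_tensm C (coll_id (coll_unit C)) f)"
proof (rule hom_eqI[OF comp_hom[OF lambda_hom f] comp_hom[OF tensm_hom[OF id_hom f] lambda_hom]])
  fix e assume "e \<in> fst (coll_tens C (coll_unit C) X)"
  then obtain u \<phi> ys where e: "e = Tr u \<phi> ys" and m: "Tr u \<phi> ys \<in> tens_carrier C (coll_unit C) X"
    by (rule tens_cases3)
  then obtain v where v: "u = TObj v" "trivial_ob C v" by (auto simp: tens_mem unit_mem)
  then have len: "length ys = 1" using m by (auto simp: tens_mem triv_card)
  have m2: "fst (snd (coll_tensm C (coll_id (coll_unit C)) f)) e \<in> tens_carrier C (coll_unit C) X'"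
    using hom_app(1)[OF tensm_hom[OF id_hom f], of e] m e by simp
  show "fst (snd (coll_comp f (coll_lambda C X))) e =
        fst (snd (coll_comp (coll_lambda C X') (coll_tensm C (coll_id (coll_unit C)) f))) e"
    using m2 len unfolding e
    by (simp add: comp_app[OF lambda_hom] comp_app[OF tensm_hom[OF id_hom f]] m lambda_app
        tensm_app[OF id_hom f m])
qed

lemma rho_nat:
  assumes X: "X \<in> coll_obs C" and X': "X' \<in> coll_obs C" and f: "f \<in> coll_hom X X'"
  shows "coll_comp (coll_rho C X') f = coll_comp (coll_tensm C f (coll_id (coll_unit C))) (coll_rho C X)"
proof (rule hom_eqI[OF comp_hom[OF f rho_hom[OF X']] comp_hom[OF rho_hom[OF X] tensm_hom[OF f id_hom]]])
  fix x assume x: "x \<in> fst X"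
  have fx: "fst (snd f) x \<in> fst X'" "snd X' (fst (snd f) x) = snd X x" using hom_app[OF f x] by auto
  have a: "snd X x \<in> obs C" using X x unfolding coll_obs_def by auto
  have ids: "\<And>i. i < card_o C (snd X x) \<Longrightarrow> fst (snd (coll_id (coll_unit C))) (TObj (fibre C (idm C (snd X x)) i))
     = TObj (fibre C (idm C (snd X x)) i)"
    using a by (auto simp: id_app triv_idm)
  show "fst (snd (coll_comp (coll_rho C X') f)) x = fst (snd (coll_comp (coll_tensm C f (coll_id (coll_unit C))) (coll_rho C X))) x"
    using fx
    apply (simp add: comp_app[OF f x] comp_app[OF rho_hom[OF X] x] rho_app x tensm_app[OF f id_hom rho_img[OF X x]])
    apply (intro ballI)
    apply (rule ids[symmetric])
    apply simp
    done
qed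

lemma lam_rho: "coll_comp (coll_lambda C (coll_unit C)) (coll_rho C (coll_unit C)) = coll_id (coll_unit C)"
proof (rule hom_eqI[OF comp_hom[OF rho_hom[OF unit_obs] lambda_hom] id_hom])
  fix x assume x: "x \<in> fst (coll_unit C)"
  then obtain u where u: "x = TObj u" "trivial_ob C u" by (auto simp: unit_mem)
  have o: "u \<in> obs C" "card_o C u = 1" using u by (auto simp: triv_obs triv_card)
  have fb: "fibre C (idm C u) 0 = u" using triv_fibre[OF u(2), of "idm C u"] o idm_mors by simp
  show "fst (snd (coll_comp (coll_lambda C (coll_unit C)) (coll_rho C (coll_unit C)))) x = fst (snd (coll_id (coll_unit C))) x"
    unfolding comp_app[OF rho_hom[OF unit_obs] x] rho_app[OF x] id_app[OF x]
    using rho_img[OF unit_obs x] o fb u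
    by (simp add: lambda_app)
qed

lemma ax_lam_alpha:
  "coll_comp (coll_lambda C (coll_tens C X Y)) (coll_alpha C (coll_unit C) X Y) =
   coll_tensm C (coll_lambda C X) (coll_id Y)"
proof (rule hom_eqI[OF comp_hom[OF alpha_hom lambda_hom] tensm_hom[OF lambda_hom id_hom]])
  fix e assume "e \<in> fst (coll_tens C (coll_tens C (coll_unit C) X) Y)"
  then obtain w \<phi> zs where e1: "e = Tr w \<phi> zs" and m0: "Tr w \<phi> zs \<in> tens_carrier C (coll_tens C (coll_unit C) X) Y"
    by (rule tens_cases3)
  then have "w \<in> tens_carrier C (coll_unit C) X" by (auto simp: tens_mem)
  then obtain u \<psi> xs where w: "w = Tr u \<psi> xs" by (auto simp: tens_carrier_def)
  note m = m0[unfolded w]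
  note E = alpha_elt[OF m]
  obtain v where v: "u = TObj v" "trivial_ob C v" using E(3) by (auto simp: unit_mem)
  have tv: "tgt C \<psi> = v" using E(4) v by simp
  have c1: "card_o C (tgt C \<psi>) = 1" using tv v triv_card by simp
  have fm: "fibre_m C \<phi> \<psi> 0 = \<phi>" using triv_fibre_m[OF v(2)] E tv by simp
  have S: "sfibl (card_m C \<psi>) (card_o C (src C \<psi>)) 0 = [0..<card_o C (src C \<psi>)]"
  proof -
    have "card_m C \<psi> k = 0" if "k < card_o C (src C \<psi>)" for k
      using card_m_lt[OF E(2) that] c1 by simp
    then show ?thesis unfolding sfibl_def by (intro filter_True) auto
  qed
  have zs: "map (\<lambda>i. zs ! i) [0..<card_o C (src C \<psi>)] = zs" using E(8) by (metis map_nth)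
  have ids: "map (fst (snd (coll_id Y))) zs = zs"
  proof (rule map_idI)
    fix y assume "y \<in> set zs"
    then obtain i where "i < length zs" "y = zs ! i" by (auto simp: in_set_conv_nth)
    then show "fst (snd (coll_id Y)) y = y" using E(9) by (auto simp: id_app)
  qed
  show "fst (snd (coll_comp (coll_lambda C (coll_tens C X Y)) (coll_alpha C (coll_unit C) X Y))) e =
        fst (snd (coll_tensm C (coll_lambda C X) (coll_id Y))) e"
    using alpha_img[OF m] c1 fm S zs ids E(10)
    by (simp add: e1 w comp_app[OF alpha_hom] m alpha_app[OF m] lambda_app tensm_app[OF lambda_hom id_hom m])
qed

end

lemma tens_comp: "Tr x \<phi> ys \<in> tens_carrier C A B \<Longrightarrow> i < length ys \<Longrightarrow> ys ! i \<in> fst B"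
  by (simp add: tens_mem)

context opc begin

lemma ax_alpha_rho:
  fixes X Y :: "('a, 'o, 'm) cobj"
  assumes X: "X \<in> coll_obs C" and Y: "Y \<in> coll_obs C"
  shows "coll_comp (coll_alpha C X Y (coll_unit C)) (coll_rho C (coll_tens C X Y)) =
         coll_tensm C (coll_id X) (coll_rho C Y)"
proof (rule hom_eqI[OF comp_hom[OF rho_hom[OF tens_obs] alpha_hom] tensm_hom[OF id_hom rho_hom[OF Y]]])
  fix e assume "e \<in> fst (coll_tens C X Y)"
  then obtain x \<psi> ys where e: "e = Tr x \<psi> ys" and m: "Tr x \<psi> ys \<in> tens_carrier C X Y"
    by (rule tens_cases3)
  have E: "\<psi> \<in> mors C" "x \<in> fst X" "snd X x = tgt C \<psi>" "length ys = card_o C (tgt C \<psi>)"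
     "\<And>j. j < length ys \<Longrightarrow> ys ! j \<in> fst Y \<and> snd Y (ys ! j) = fibre C \<psi> j"
    using m by (auto simp: tens_mem)
  define c where "c = src C \<psi>"
  have c: "c \<in> obs C" using E mors_src c_def by simp
  define zs :: "('a, 'o, 'm) elt list" where "zs = map (\<lambda>i. TObj (fibre C (idm C c) i)) [0..<card_o C c]"
  have e1: "e \<in> fst (coll_tens C X Y)" using m e by simp
  have r: "fst (snd (coll_rho C (coll_tens C X Y))) e = Tr (Tr x \<psi> ys) (idm C c) zs"
    using rho_app[OF e1] m unfolding e zs_def c_def by simp
  have m2: "Tr (Tr x \<psi> ys) (idm C c) zs \<in> tens_carrier C (coll_tens C X Y) (coll_unit C)"
    using rho_img[OF tens_obs e1] m unfolding e zs_def c_def by simp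
  have lhs: "fst (snd (coll_comp (coll_alpha C X Y (coll_unit C)) (coll_rho C (coll_tens C X Y)))) e =
     Tr x \<psi> (map (\<lambda>j. Tr (ys ! j) (idm C (fibre C \<psi> j))
                  (map (\<lambda>i. zs ! i) (sfibl (card_m C \<psi>) (card_o C c) j)))
           [0..<card_o C (tgt C \<psi>)])"
    unfolding comp_app[OF rho_hom[OF tens_obs] e1] r alpha_app[OF m2]
    using E c_def by (simp add: cmp_idr fibre_m_idm)
  have rhs: "fst (snd (coll_tensm C (coll_id X) (coll_rho C Y))) e = Tr x \<psi> (map (fst (snd (coll_rho C Y))) ys)"
    unfolding e tensm_app[OF id_hom rho_hom[OF Y] m] using E by (simp add: id_app)
  have inner: "map (\<lambda>i. zs ! i) (sfibl (card_m C \<psi>) (card_o C c) j) =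
     map (\<lambda>i. TObj (fibre C (idm C (fibre C \<psi> j)) i)) [0..<card_o C (fibre C \<psi> j)]"
    if j: "j < card_o C (tgt C \<psi>)" for j
  proof (rule nth_equalityI)
    show len: "length (map (\<lambda>i. zs ! i) (sfibl (card_m C \<psi>) (card_o C c) j)) =
      length (map (\<lambda>i. TObj (fibre C (idm C (fibre C \<psi> j)) i)) [0..<card_o C (fibre C \<psi> j)])"
      using card_fibre[OF E(1) j] c_def by simp
    fix k assume k: "k < length (map (\<lambda>i. zs ! i) (sfibl (card_m C \<psi>) (card_o C c) j))"
    then have k': "k < length (sfibl (card_m C \<psi>) (card_o C c) j)" by simp
    define i where "i = sfibl (card_m C \<psi>) (card_o C c) j ! k"
    have i: "i < card_o C c" "card_m C \<psi> i = j" "sidx (card_m C \<psi>) i = k"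
      using sfibl_nth[OF k'] sfibl_sidx[OF k'] i_def by auto
    have "fibre C (idm C c) i = fibre C (fibre_m C (idm C c) \<psi> j) k"
      using ds_ob[of "idm C c" \<psi> i] E(1) c i c_def idm_mors by simp
    also have "\<dots> = fibre C (idm C (fibre C \<psi> j)) k"
      using fibre_m_idm[OF E(1) j] c_def by simp
    finally have "zs ! i = TObj (fibre C (idm C (fibre C \<psi> j)) k)"
      using i zs_def by simp
    moreover have "k < card_o C (fibre C \<psi> j)" using k' card_fibre[OF E(1) j] c_def by simp
    ultimately show "map (\<lambda>i. zs ! i) (sfibl (card_m C \<psi>) (card_o C c) j) ! k =
       map (\<lambda>i. TObj (fibre C (idm C (fibre C \<psi> j)) i)) [0..<card_o C (fibre C \<psi> j)] ! k"
      using k' i_def by simp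
  qed
  have "map (\<lambda>j. Tr (ys ! j) (idm C (fibre C \<psi> j))
                  (map (\<lambda>i. zs ! i) (sfibl (card_m C \<psi>) (card_o C c) j)))
           [0..<card_o C (tgt C \<psi>)] = map (fst (snd (coll_rho C Y))) ys"
  proof (rule nth_equalityI)
    show "length (map (\<lambda>j. Tr (ys ! j) (idm C (fibre C \<psi> j))
                  (map (\<lambda>i. zs ! i) (sfibl (card_m C \<psi>) (card_o C c) j)))
           [0..<card_o C (tgt C \<psi>)]) = length (map (fst (snd (coll_rho C Y))) ys)" using E by simp
    fix j assume "j < length (map (\<lambda>j. Tr (ys ! j) (idm C (fibre C \<psi> j))
                  (map (\<lambda>i. zs ! i) (sfibl (card_m C \<psi>) (card_o C c) j)))
           [0..<card_o C (tgt C \<psi>)])"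
    then have j: "j < card_o C (tgt C \<psi>)" by simp
    have yj: "ys ! j \<in> fst Y" "snd Y (ys ! j) = fibre C \<psi> j" using E(4,5) j by auto
    show "map (\<lambda>j. Tr (ys ! j) (idm C (fibre C \<psi> j))
                  (map (\<lambda>i. zs ! i) (sfibl (card_m C \<psi>) (card_o C c) j)))
           [0..<card_o C (tgt C \<psi>)] ! j = map (fst (snd (coll_rho C Y))) ys ! j"
      using j E(4) yj inner[OF j] by (simp add: rho_app)
  qed
  then show "fst (snd (coll_comp (coll_alpha C X Y (coll_unit C)) (coll_rho C (coll_tens C X Y)))) e =
        fst (snd (coll_tensm C (coll_id X) (coll_rho C Y))) e"
    unfolding lhs rhs by simp
qed

lemma ax_tri:
  fixes X Y :: "('a, 'o, 'm) cobj"
  assumes X: "X \<in> coll_obs C"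
  shows "coll_comp (coll_comp (coll_tensm C (coll_id X) (coll_lambda C Y)) (coll_alpha C X (coll_unit C) Y))
           (coll_tensm C (coll_rho C X) (coll_id Y)) = coll_id (coll_tens C X Y)"
proof (rule hom_eqI[OF comp_hom[OF tensm_hom[OF rho_hom[OF X] id_hom] comp_hom[OF alpha_hom tensm_hom[OF id_hom lambda_hom]]] id_hom])
  fix e assume e1: "e \<in> fst (coll_tens C X Y)"
  then obtain x \<psi> ys where e: "e = Tr x \<psi> ys" and m: "Tr x \<psi> ys \<in> tens_carrier C X Y"
    by (rule tens_cases3)
  have E: "\<psi> \<in> mors C" "x \<in> fst X" "snd X x = tgt C \<psi>" "length ys = card_o C (tgt C \<psi>)"
     "\<And>j. j < length ys \<Longrightarrow> ys ! j \<in> fst Y \<and> snd Y (ys ! j) = fibre C \<psi> j"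
    using m by (auto simp: tens_mem)
  define d where "d = tgt C \<psi>"
  have d: "d \<in> obs C" using E mors_tgt d_def by simp
  define us :: "('a, 'o, 'm) elt list" where "us = map (\<lambda>i. TObj (fibre C (idm C d) i)) [0..<card_o C d]"
  have ids: "map (fst (snd (coll_id Y))) ys = ys"
  proof (rule map_idI)
    fix y assume "y \<in> set ys"
    then obtain i where "i < length ys" "y = ys ! i" by (auto simp: in_set_conv_nth)
    then show "fst (snd (coll_id Y)) y = y" using E(5) by (auto simp: id_app)
  qed
  have s1: "fst (snd (coll_tensm C (coll_rho C X) (coll_id Y))) e = Tr (Tr x (idm C d) us) \<psi> ys"
    unfolding e tensm_app[OF rho_hom[OF X] id_hom m] rho_app[OF E(2)] ids using E d_def us_def by simp
  have m2: "Tr (Tr x (idm C d) us) \<psi> ys \<in> tens_carrier C (coll_tens C X (coll_unit C)) Y"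
    using hom_app(1)[OF tensm_hom[OF rho_hom[OF X] id_hom] e1] s1 by simp
  have S: "sfibl (card_m C (idm C d)) (card_o C (src C (idm C d))) j = [j]" if "j < card_o C d" for j
    using sfibl_idm[OF d that] d by simp
  have s2: "fst (snd (coll_alpha C X (coll_unit C) Y)) (Tr (Tr x (idm C d) us) \<psi> ys) =
     Tr x \<psi> (map (\<lambda>j. Tr (us ! j) (fibre_m C \<psi> (idm C d) j) [ys ! j]) [0..<card_o C d])"
    unfolding alpha_app[OF m2] using d d_def E(1) S by (simp add: cmp_idl)
  have m3: "Tr x \<psi> (map (\<lambda>j. Tr (us ! j) (fibre_m C \<psi> (idm C d) j) [ys ! j]) [0..<card_o C d])
     \<in> tens_carrier C X (coll_tens C (coll_unit C) Y)"
    using alpha_img[OF m2] s2 alpha_app[OF m2] by simp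
  have s3: "fst (snd (coll_tensm C (coll_id X) (coll_lambda C Y)))
      (Tr x \<psi> (map (\<lambda>j. Tr (us ! j) (fibre_m C \<psi> (idm C d) j) [ys ! j]) [0..<card_o C d])) = Tr x \<psi> ys"
  proof -
    have "map (fst (snd (coll_lambda C Y))) (map (\<lambda>j. Tr (us ! j) (fibre_m C \<psi> (idm C d) j) [ys ! j]) [0..<card_o C d])
       = map (\<lambda>j. ys ! j) [0..<length ys]"
    proof -
      have cm: "Tr (us ! j) (fibre_m C \<psi> (idm C d) j) [ys ! j] \<in> tens_carrier C (coll_unit C) Y"
        if "j < card_o C d" for j
      proof -
        have "\<forall>i<length (map (\<lambda>j. Tr (us ! j) (fibre_m C \<psi> (idm C d) j) [ys ! j]) [0..<card_o C d]).
           map (\<lambda>j. Tr (us ! j) (fibre_m C \<psi> (idm C d) j) [ys ! j]) [0..<card_o C d] ! i \<in> fst (coll_tens C (coll_unit C) Y)"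
          using tens_comp[OF m3] by blast
        then show ?thesis using that by simp
      qed
      show ?thesis using E(4) d_def cm by (simp add: lambda_app)
    qed
    also have "\<dots> = ys" by (simp add: map_nth)
    finally show ?thesis unfolding tensm_app[OF id_hom lambda_hom m3] using E(2) by (simp add: id_app)
  qed
  show "fst (snd (coll_comp (coll_comp (coll_tensm C (coll_id X) (coll_lambda C Y)) (coll_alpha C X (coll_unit C) Y))
           (coll_tensm C (coll_rho C X) (coll_id Y)))) e = fst (snd (coll_id (coll_tens C X Y))) e"
  proof -
    have "fst (snd (coll_comp (coll_comp (coll_tensm C (coll_id X) (coll_lambda C Y)) (coll_alpha C X (coll_unit C) Y))
           (coll_tensm C (coll_rho C X) (coll_id Y)))) e =
       fst (snd (coll_comp (coll_tensm C (coll_id X) (coll_lambda C Y)) (coll_alpha C X (coll_unit C) Y))) (Tr (Tr x (idm C d) us) \<psi> ys)"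
      unfolding comp_app[OF tensm_hom[OF rho_hom[OF X] id_hom] e1] s1 ..
    also have "\<dots> = Tr x \<psi> ys"
      unfolding comp_app[OF alpha_hom m2[folded tens_fst]] s2 s3 ..
    also have "\<dots> = fst (snd (coll_id (coll_tens C X Y))) e" using id_app[OF e1] e by simp
    finally show ?thesis .
  qed
qed

end

context opc begin

lemma alpha_nat:
  fixes X Y Z X' Y' Z' :: "('a, 'o, 'm) cobj"
  assumes f: "f \<in> coll_hom X X'" and g: "g \<in> coll_hom Y Y'" and h: "h \<in> coll_hom Z Z'"
  shows "coll_comp (coll_alpha C X' Y' Z') (coll_tensm C (coll_tensm C f g) h) =
         coll_comp (coll_tensm C f (coll_tensm C g h)) (coll_alpha C X Y Z)"
proof (rule hom_eqI[OF comp_hom[OF tensm_hom[OF tensm_hom[OF f g] h] alpha_hom]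
      comp_hom[OF alpha_hom tensm_hom[OF f tensm_hom[OF g h]]]])
  fix e assume e1: "e \<in> fst (coll_tens C (coll_tens C X Y) Z)"
  then obtain w \<phi> zs where ew: "e = Tr w \<phi> zs" and m0: "Tr w \<phi> zs \<in> tens_carrier C (coll_tens C X Y) Z"
    by (rule tens_cases3)
  then have "w \<in> tens_carrier C X Y" by (auto simp: tens_mem)
  then obtain x \<psi> ys where w: "w = Tr x \<psi> ys" by (auto simp: tens_carrier_def)
  note m = m0[unfolded w]
  have e: "e = Tr (Tr x \<psi> ys) \<phi> zs" using ew w by simp
  note E = alpha_elt[OF m]
  let ?f = "fst (snd f)" and ?g = "fst (snd g)" and ?h = "fst (snd h)"
  let ?S = "\<lambda>j. sfibl (card_m C \<psi>) (card_o C (src C \<psi>)) j"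
  let ?n = "card_o C (tgt C \<psi>)"
  have t1: "fst (snd (coll_tensm C (coll_tensm C f g) h)) e = Tr (Tr (?f x) \<psi> (map ?g ys)) \<phi> (map ?h zs)"
    unfolding e tensm_app[OF tensm_hom[OF f g] h m] tensm_app[OF f g E(10)] ..
  have mt1: "Tr (Tr (?f x) \<psi> (map ?g ys)) \<phi> (map ?h zs) \<in> tens_carrier C (coll_tens C X' Y') Z'"
    using hom_app(1)[OF tensm_hom[OF tensm_hom[OF f g] h] e1] t1 by simp
  have lhs: "fst (snd (coll_comp (coll_alpha C X' Y' Z') (coll_tensm C (coll_tensm C f g) h))) e =
    Tr (?f x) (cmp C \<psi> \<phi>) (map (\<lambda>j. Tr (map ?g ys ! j) (fibre_m C \<phi> \<psi> j)
                  (map (\<lambda>i. map ?h zs ! i) (?S j))) [0..<?n])"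
    unfolding comp_app[OF tensm_hom[OF tensm_hom[OF f g] h] e1] t1 alpha_app[OF mt1] ..
  define L where "L = map (\<lambda>j. Tr (ys ! j) (fibre_m C \<phi> \<psi> j) (map (\<lambda>i. zs ! i) (?S j))) [0..<?n]"
  have a1: "fst (snd (coll_alpha C X Y Z)) e = Tr x (cmp C \<psi> \<phi>) L"
    unfolding e alpha_app[OF m] L_def ..
  have ma1: "Tr x (cmp C \<psi> \<phi>) L \<in> tens_carrier C X (coll_tens C Y Z)"
    using alpha_img[OF m] unfolding L_def .
  have rhs: "fst (snd (coll_comp (coll_tensm C f (coll_tensm C g h)) (coll_alpha C X Y Z))) e =
     Tr (?f x) (cmp C \<psi> \<phi>) (map (fst (snd (coll_tensm C g h))) L)"
    unfolding comp_app[OF alpha_hom e1] a1 tensm_app[OF f tensm_hom[OF g h] ma1] ..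
  have "map (\<lambda>j. Tr (map ?g ys ! j) (fibre_m C \<phi> \<psi> j)
                  (map (\<lambda>i. map ?h zs ! i) (?S j))) [0..<?n] = map (fst (snd (coll_tensm C g h))) L"
  proof (rule nth_equalityI)
    show "length (map (\<lambda>j. Tr (map ?g ys ! j) (fibre_m C \<phi> \<psi> j)
                  (map (\<lambda>i. map ?h zs ! i) (?S j))) [0..<?n]) = length (map (fst (snd (coll_tensm C g h))) L)"
      unfolding L_def by simp
    fix j assume "j < length (map (\<lambda>j. Tr (map ?g ys ! j) (fibre_m C \<phi> \<psi> j)
                  (map (\<lambda>i. map ?h zs ! i) (?S j))) [0..<?n])"
    then have j: "j < ?n" by simp
    have Lj: "L ! j = Tr (ys ! j) (fibre_m C \<phi> \<psi> j) (map (\<lambda>i. zs ! i) (?S j))" using j L_def by simp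
    have mLj: "Tr (ys ! j) (fibre_m C \<phi> \<psi> j) (map (\<lambda>i. zs ! i) (?S j)) \<in> tens_carrier C Y Z"
      using tens_comp[OF ma1, of j] j Lj L_def by simp
    have Sj: "\<And>i. i \<in> set (?S j) \<Longrightarrow> i < length zs" using E(8) by (auto simp: sfibl_def)
    have "map (\<lambda>i. map ?h zs ! i) (?S j) = map ?h (map (\<lambda>i. zs ! i) (?S j))"
      using Sj by simp
    then show "map (\<lambda>j. Tr (map ?g ys ! j) (fibre_m C \<phi> \<psi> j)
                  (map (\<lambda>i. map ?h zs ! i) (?S j))) [0..<?n] ! j = map (fst (snd (coll_tensm C g h))) L ! j"
      using j E(6) L_def Lj tensm_app[OF g h mLj] by simp
  qed
  then show "fst (snd (coll_comp (coll_alpha C X' Y' Z') (coll_tensm C (coll_tensm C f g) h))) e =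
         fst (snd (coll_comp (coll_tensm C f (coll_tensm C g h)) (coll_alpha C X Y Z))) e"
    unfolding lhs rhs by simp
qed

end

context opc begin

lemma pentagon:
  fixes W X Y Z :: "('a, 'o, 'm) cobj"
  shows "coll_comp (coll_comp (coll_tensm C (coll_id W) (coll_alpha C X Y Z)) (coll_alpha C W (coll_tens C X Y) Z))
           (coll_tensm C (coll_alpha C W X Y) (coll_id Z)) =
         coll_comp (coll_alpha C W X (coll_tens C Y Z)) (coll_alpha C (coll_tens C W X) Y Z)"
proof (rule hom_eqI[OF comp_hom[OF tensm_hom[OF alpha_hom id_hom] comp_hom[OF alpha_hom tensm_hom[OF id_hom alpha_hom]]]
      comp_hom[OF alpha_hom alpha_hom]])
  fix e assume e0: "e \<in> fst (coll_tens C (coll_tens C (coll_tens C W X) Y) Z)"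
  then obtain e1 \<phi> zs where ee: "e = Tr e1 \<phi> zs" and m0: "Tr e1 \<phi> zs \<in> tens_carrier C (coll_tens C (coll_tens C W X) Y) Z"
    by (rule tens_cases3)
  then have "e1 \<in> tens_carrier C (coll_tens C W X) Y" by (auto simp: tens_mem)
  then obtain e2 \<psi> ys where ee1: "e1 = Tr e2 \<psi> ys" by (auto simp: tens_carrier_def)
  have "e2 \<in> tens_carrier C W X" using m0 ee1 by (auto simp: tens_mem)
  then obtain w \<chi> xs where ee2: "e2 = Tr w \<chi> xs" by (auto simp: tens_carrier_def)
  have e: "e = Tr (Tr (Tr w \<chi> xs) \<psi> ys) \<phi> zs" using ee ee1 ee2 by simp
  have m: "Tr (Tr (Tr w \<chi> xs) \<psi> ys) \<phi> zs \<in> tens_carrier C (coll_tens C (coll_tens C W X) Y) Z"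
    using m0 ee1 ee2 by simp
  note E = alpha_elt[OF m]
  note m1 = E(10)
  note E1 = alpha_elt[OF m1]
  have mors: "\<phi> \<in> mors C" "\<psi> \<in> mors C" "\<chi> \<in> mors C" "tgt C \<phi> = src C \<psi>" "tgt C \<psi> = src C \<chi>"
    using E E1 by auto
  have wW: "w \<in> fst W" using E1 by simp
  define Sc where "Sc = (\<lambda>k. sfibl (card_m C \<chi>) (card_o C (src C \<chi>)) k)"
  define Sp where "Sp = (\<lambda>j. sfibl (card_m C \<psi>) (card_o C (src C \<psi>)) j)"
  define Scp where "Scp = (\<lambda>k. sfibl (card_m C (cmp C \<chi> \<psi>)) (card_o C (src C (cmp C \<chi> \<psi>))) k)"
  define Y' where "Y' = map (\<lambda>j. Tr (ys ! j) (fibre_m C \<phi> \<psi> j) (map (\<lambda>i. zs ! i) (Sp j))) [0..<card_o C (tgt C \<psi>)]"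
  define X'' where "X'' = map (\<lambda>k. Tr (xs ! k) (fibre_m C \<psi> \<chi> k) (map (\<lambda>i. ys ! i) (Sc k))) [0..<card_o C (tgt C \<chi>)]"
  define M where "M = map (\<lambda>k. Tr (X'' ! k) (fibre_m C \<phi> (cmp C \<chi> \<psi>) k) (map (\<lambda>i. zs ! i) (Scp k))) [0..<card_o C (tgt C (cmp C \<chi> \<psi>))]"
  have r1: "fst (snd (coll_alpha C (coll_tens C W X) Y Z)) e = Tr (Tr w \<chi> xs) (cmp C \<psi> \<phi>) Y'"
    unfolding e alpha_app[OF m] Y'_def Sp_def ..
  have mr1: "Tr (Tr w \<chi> xs) (cmp C \<psi> \<phi>) Y' \<in> tens_carrier C (coll_tens C W X) (coll_tens C Y Z)"
    using alpha_img[OF m] unfolding Y'_def Sp_def .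
  have rhs: "fst (snd (coll_comp (coll_alpha C W X (coll_tens C Y Z)) (coll_alpha C (coll_tens C W X) Y Z))) e =
     Tr w (cmp C \<chi> (cmp C \<psi> \<phi>)) (map (\<lambda>k. Tr (xs ! k) (fibre_m C (cmp C \<psi> \<phi>) \<chi> k) (map (\<lambda>j. Y' ! j) (Sc k))) [0..<card_o C (tgt C \<chi>)])"
    unfolding comp_app[OF alpha_hom e0] r1 alpha_app[OF mr1] Sc_def using mors by simp
  have ids: "map (fst (snd (coll_id Z))) zs = zs"
  proof (rule map_idI)
    fix y assume "y \<in> set zs"
    then obtain i where "i < length zs" "y = zs ! i" by (auto simp: in_set_conv_nth)
    then show "fst (snd (coll_id Z)) y = y" using E(9) by (auto simp: id_app)
  qed
  have l1: "fst (snd (coll_tensm C (coll_alpha C W X Y) (coll_id Z))) e = Tr (Tr w (cmp C \<chi> \<psi>) X'') \<phi> zs"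
    unfolding e tensm_app[OF alpha_hom id_hom m] alpha_app[OF m1] ids X''_def Sc_def by simp
  have ml1: "Tr (Tr w (cmp C \<chi> \<psi>) X'') \<phi> zs \<in> tens_carrier C (coll_tens C W (coll_tens C X Y)) Z"
    using hom_app(1)[OF tensm_hom[OF alpha_hom id_hom] e0] l1 by simp
  have l2: "fst (snd (coll_alpha C W (coll_tens C X Y) Z)) (Tr (Tr w (cmp C \<chi> \<psi>) X'') \<phi> zs) =
      Tr w (cmp C (cmp C \<chi> \<psi>) \<phi>) M"
    unfolding alpha_app[OF ml1] M_def Scp_def ..
  have ml2: "Tr w (cmp C (cmp C \<chi> \<psi>) \<phi>) M \<in> tens_carrier C W (coll_tens C (coll_tens C X Y) Z)"
    using alpha_img[OF ml1] unfolding M_def Scp_def .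
  have lhs: "fst (snd (coll_comp (coll_comp (coll_tensm C (coll_id W) (coll_alpha C X Y Z)) (coll_alpha C W (coll_tens C X Y) Z))
           (coll_tensm C (coll_alpha C W X Y) (coll_id Z)))) e =
     Tr w (cmp C (cmp C \<chi> \<psi>) \<phi>) (map (fst (snd (coll_alpha C X Y Z))) M)"
  proof -
    have "fst (snd (coll_comp (coll_comp (coll_tensm C (coll_id W) (coll_alpha C X Y Z)) (coll_alpha C W (coll_tens C X Y) Z))
           (coll_tensm C (coll_alpha C W X Y) (coll_id Z)))) e =
       fst (snd (coll_comp (coll_tensm C (coll_id W) (coll_alpha C X Y Z)) (coll_alpha C W (coll_tens C X Y) Z)))
         (Tr (Tr w (cmp C \<chi> \<psi>) X'') \<phi> zs)"
      unfolding comp_app[OF tensm_hom[OF alpha_hom id_hom] e0] l1 ..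
    also have "\<dots> = fst (snd (coll_tensm C (coll_id W) (coll_alpha C X Y Z))) (Tr w (cmp C (cmp C \<chi> \<psi>) \<phi>) M)"
      unfolding comp_app[OF alpha_hom ml1[folded tens_fst]] l2 ..
    also have "\<dots> = Tr w (cmp C (cmp C \<chi> \<psi>) \<phi>) (map (fst (snd (coll_alpha C X Y Z))) M)"
      unfolding tensm_app[OF id_hom alpha_hom ml2] id_app[OF wW] ..
    finally show ?thesis .
  qed
  have assoc: "cmp C (cmp C \<chi> \<psi>) \<phi> = cmp C \<chi> (cmp C \<psi> \<phi>)" using cmp_assoc mors by metis
  have list: "map (fst (snd (coll_alpha C X Y Z))) M =
     map (\<lambda>k. Tr (xs ! k) (fibre_m C (cmp C \<psi> \<phi>) \<chi> k) (map (\<lambda>j. Y' ! j) (Sc k))) [0..<card_o C (tgt C \<chi>)]"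
  proof (rule nth_equalityI)
    show "length (map (fst (snd (coll_alpha C X Y Z))) M) =
      length (map (\<lambda>k. Tr (xs ! k) (fibre_m C (cmp C \<psi> \<phi>) \<chi> k) (map (\<lambda>j. Y' ! j) (Sc k))) [0..<card_o C (tgt C \<chi>)])"
      unfolding M_def using mors by simp
    fix k assume "k < length (map (fst (snd (coll_alpha C X Y Z))) M)"
    then have k: "k < card_o C (tgt C \<chi>)" unfolding M_def using mors by simp
    have Mk: "M ! k = Tr (Tr (xs ! k) (fibre_m C \<psi> \<chi> k) (map (\<lambda>i. ys ! i) (Sc k))) (fibre_m C \<phi> (cmp C \<chi> \<psi>) k)
        (map (\<lambda>i. zs ! i) (Scp k))"
      unfolding M_def X''_def using k mors by simp
    have mMk: "M ! k \<in> tens_carrier C (coll_tens C X Y) Z"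
      using tens_comp[OF ml2, of k] k mors unfolding M_def by simp
    have lenSc: "length (Sc k) = card_o C (fibre C \<chi> k)" using card_fibre[OF mors(3) k] Sc_def by simp
    have lenScp: "length (Scp k) = card_o C (fibre C (cmp C \<chi> \<psi>) k)"
      using card_fibre[of "cmp C \<chi> \<psi>" k] k mors Scp_def by (simp add: cmp_mors)
    have Scp': "Scp k = sfibl (card_m C (cmp C \<chi> \<psi>)) (card_o C (src C \<psi>)) k" using mors Scp_def by simp
    have inner: "map (\<lambda>l. Tr (map (\<lambda>i. ys ! i) (Sc k) ! l)
               (fibre_m C (fibre_m C \<phi> (cmp C \<chi> \<psi>) k) (fibre_m C \<psi> \<chi> k) l)
               (map (\<lambda>i. map (\<lambda>i. zs ! i) (Scp k) ! i)
                 (sfibl (card_m C (fibre_m C \<psi> \<chi> k)) (card_o C (src C (fibre_m C \<psi> \<chi> k))) l)))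
          [0..<card_o C (tgt C (fibre_m C \<psi> \<chi> k))] = map (\<lambda>j. Y' ! j) (Sc k)"
    proof (rule nth_equalityI)
      show "length (map (\<lambda>l. Tr (map (\<lambda>i. ys ! i) (Sc k) ! l)
               (fibre_m C (fibre_m C \<phi> (cmp C \<chi> \<psi>) k) (fibre_m C \<psi> \<chi> k) l)
               (map (\<lambda>i. map (\<lambda>i. zs ! i) (Scp k) ! i)
                 (sfibl (card_m C (fibre_m C \<psi> \<chi> k)) (card_o C (src C (fibre_m C \<psi> \<chi> k))) l)))
          [0..<card_o C (tgt C (fibre_m C \<psi> \<chi> k))]) = length (map (\<lambda>j. Y' ! j) (Sc k))"
        using lenSc k mors by simp
      fix l assume "l < length (map (\<lambda>l. Tr (map (\<lambda>i. ys ! i) (Sc k) ! l)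
               (fibre_m C (fibre_m C \<phi> (cmp C \<chi> \<psi>) k) (fibre_m C \<psi> \<chi> k) l)
               (map (\<lambda>i. map (\<lambda>i. zs ! i) (Scp k) ! i)
                 (sfibl (card_m C (fibre_m C \<psi> \<chi> k)) (card_o C (src C (fibre_m C \<psi> \<chi> k))) l)))
          [0..<card_o C (tgt C (fibre_m C \<psi> \<chi> k))])"
      then have l: "l < length (Sc k)" using lenSc k mors by simp
      define j where "j = Sc k ! l"
      have j: "j < card_o C (src C \<chi>)" "card_m C \<chi> j = k" "sidx (card_m C \<chi>) j = l"
        using sfibl_nth[OF l[unfolded Sc_def]] sfibl_sidx[OF l[unfolded Sc_def]] j_def Sc_def by auto
      have jn: "j < card_o C (tgt C \<psi>)" using j mors by simp
      have Y'j: "Y' ! j = Tr (ys ! j) (fibre_m C \<phi> \<psi> j) (map (\<lambda>i. zs ! i) (Sp j))"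
        using jn Y'_def by simp
      have mor: "fibre_m C (fibre_m C \<phi> (cmp C \<chi> \<psi>) k) (fibre_m C \<psi> \<chi> k) l = fibre_m C \<phi> \<psi> j"
        using ds_mor[of \<phi> \<psi> \<chi> j] mors j by simp
      have srcf: "card_o C (src C (fibre_m C \<psi> \<chi> k)) = length (Scp k)"
        using lenScp mors k by simp
      have pl: "map (\<lambda>m. Scp k ! m) (sfibl (card_m C (fibre_m C \<psi> \<chi> k)) (length (Scp k)) l) = Sp j"
        using pent_list[OF mors(3) mors(2) mors(5) k l[unfolded Sc_def]] unfolding Scp' Sp_def j_def Sc_def .
      have bnd: "\<And>i. i \<in> set (sfibl (card_m C (fibre_m C \<psi> \<chi> k)) (length (Scp k)) l) \<Longrightarrow> i < length (Scp k)"
        by (auto simp: sfibl_def)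
      have zl: "map (\<lambda>i. map (\<lambda>i. zs ! i) (Scp k) ! i) (sfibl (card_m C (fibre_m C \<psi> \<chi> k)) (length (Scp k)) l)
          = map (\<lambda>i. zs ! i) (Sp j)"
      proof -
        have "map (\<lambda>i. map (\<lambda>i. zs ! i) (Scp k) ! i) (sfibl (card_m C (fibre_m C \<psi> \<chi> k)) (length (Scp k)) l)
          = map (\<lambda>i. zs ! i) (map (\<lambda>m. Scp k ! m) (sfibl (card_m C (fibre_m C \<psi> \<chi> k)) (length (Scp k)) l))"
          using bnd by simp
        then show ?thesis using pl by simp
      qed
      show "map (\<lambda>l. Tr (map (\<lambda>i. ys ! i) (Sc k) ! l)
               (fibre_m C (fibre_m C \<phi> (cmp C \<chi> \<psi>) k) (fibre_m C \<psi> \<chi> k) l)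
               (map (\<lambda>i. map (\<lambda>i. zs ! i) (Scp k) ! i)
                 (sfibl (card_m C (fibre_m C \<psi> \<chi> k)) (card_o C (src C (fibre_m C \<psi> \<chi> k))) l)))
          [0..<card_o C (tgt C (fibre_m C \<psi> \<chi> k))] ! l = map (\<lambda>j. Y' ! j) (Sc k) ! l"
        using l lenSc k mors Y'j mor srcf zl j_def by simp
    qed
    have fmc: "fibre_m C (cmp C \<psi> \<phi>) \<chi> k = cmp C (fibre_m C \<psi> \<chi> k) (fibre_m C \<phi> (cmp C \<chi> \<psi>) k)"
      using fibre_m_cmp[of \<phi> \<psi> \<chi> k] mors k by simp
    have "fst (snd (coll_alpha C X Y Z)) (M ! k) =
       Tr (xs ! k) (fibre_m C (cmp C \<psi> \<phi>) \<chi> k) (map (\<lambda>j. Y' ! j) (Sc k))"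
      using mMk unfolding Mk
      apply (subst alpha_app)
       apply assumption
      using inner fmc by simp
    then show "map (fst (snd (coll_alpha C X Y Z))) M ! k =
      map (\<lambda>k. Tr (xs ! k) (fibre_m C (cmp C \<psi> \<phi>) \<chi> k) (map (\<lambda>j. Y' ! j) (Sc k))) [0..<card_o C (tgt C \<chi>)] ! k"
      using k mors unfolding M_def by simp
  qed
  show "fst (snd (coll_comp (coll_comp (coll_tensm C (coll_id W) (coll_alpha C X Y Z)) (coll_alpha C W (coll_tens C X Y) Z))
           (coll_tensm C (coll_alpha C W X Y) (coll_id Z)))) e =
        fst (snd (coll_comp (coll_alpha C W X (coll_tens C Y Z)) (coll_alpha C (coll_tens C W X) Y Z))) e"
    unfolding lhs rhs assoc list ..
qed

end

theorem theorem3p4: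
  fixes C :: "('o, 'm) opcat"
  assumes "operadic_category C"
  shows "skew_monoidal_category
           (coll_obs C :: ('a, 'o, 'm) cobj set) coll_hom coll_comp coll_id
           (coll_tens C) (coll_tensm C) (coll_unit C)
           (coll_alpha C) (coll_lambda C) (coll_rho C)"
proof -
  interpret opc C by (rule opc.intro) (rule assms)
  show ?thesis
    unfolding skew_monoidal_category_def
  proof (intro conjI ballI)
    show "is_category (coll_obs C :: ('a, 'o, 'm) cobj set) coll_hom coll_comp coll_id"
      by (rule coll_is_category)
  next
    fix A B :: "('a, 'o, 'm) cobj" show "coll_tens C A B \<in> coll_obs C" by (rule tens_obs)
  next
    fix A A' B B' :: "('a, 'o, 'm) cobj" and f g
    assume "f \<in> coll_hom A A'" "g \<in> coll_hom B B'"
    then show "coll_tensm C f g \<in> coll_hom (coll_tens C A B) (coll_tens C A' B')" by (rule tensm_hom)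
  next
    fix A B :: "('a, 'o, 'm) cobj"
    show "coll_tensm C (coll_id A) (coll_id B) = coll_id (coll_tens C A B)" by (rule tensm_id)
  next
    fix A A' A'' B B' B'' :: "('a, 'o, 'm) cobj" and f f' g g'
    assume "f \<in> coll_hom A A'" "f' \<in> coll_hom A' A''" "g \<in> coll_hom B B'" "g' \<in> coll_hom B' B''"
    then show "coll_tensm C (coll_comp f' f) (coll_comp g' g) = coll_comp (coll_tensm C f' g') (coll_tensm C f g)"
      by (rule tensm_comp)
  next
    show "coll_unit C \<in> coll_obs C" by (rule unit_obs)
  next
    fix X Y Z :: "('a, 'o, 'm) cobj"
    show "coll_alpha C X Y Z \<in> coll_hom (coll_tens C (coll_tens C X Y) Z) (coll_tens C X (coll_tens C Y Z))"
      by (rule alpha_hom)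
  next
    fix X :: "('a, 'o, 'm) cobj"
    show "coll_lambda C X \<in> coll_hom (coll_tens C (coll_unit C) X) X" by (rule lambda_hom)
  next
    fix X :: "('a, 'o, 'm) cobj" assume "X \<in> coll_obs C"
    then show "coll_rho C X \<in> coll_hom X (coll_tens C X (coll_unit C))" by (rule rho_hom)
  next
    fix X X' Y Y' Z Z' :: "('a, 'o, 'm) cobj" and f g h
    assume "f \<in> coll_hom X X'" "g \<in> coll_hom Y Y'" "h \<in> coll_hom Z Z'"
    then show "coll_comp (coll_alpha C X' Y' Z') (coll_tensm C (coll_tensm C f g) h) =
         coll_comp (coll_tensm C f (coll_tensm C g h)) (coll_alpha C X Y Z)" by (rule alpha_nat)
  next
    fix X X' :: "('a, 'o, 'm) cobj" and f assume "f \<in> coll_hom X X'"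
    then show "coll_comp f (coll_lambda C X) = coll_comp (coll_lambda C X') (coll_tensm C (coll_id (coll_unit C)) f)"
      by (rule lambda_nat)
  next
    fix X X' :: "('a, 'o, 'm) cobj" and f assume "X \<in> coll_obs C" "X' \<in> coll_obs C" "f \<in> coll_hom X X'"
    then show "coll_comp (coll_rho C X') f = coll_comp (coll_tensm C f (coll_id (coll_unit C))) (coll_rho C X)"
      by (rule rho_nat)
  next
    show "coll_comp (coll_lambda C (coll_unit C)) (coll_rho C (coll_unit C)) = (coll_id (coll_unit C) :: ('a, 'o, 'm) cmor)"
      by (rule lam_rho)
  next
    fix X Y :: "('a, 'o, 'm) cobj"
    show "coll_comp (coll_lambda C (coll_tens C X Y)) (coll_alpha C (coll_unit C) X Y) =
       coll_tensm C (coll_lambda C X) (coll_id Y)" by (rule ax_lam_alpha)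
  next
    fix X Y :: "('a, 'o, 'm) cobj" assume "X \<in> coll_obs C" "Y \<in> coll_obs C"
    then show "coll_comp (coll_alpha C X Y (coll_unit C)) (coll_rho C (coll_tens C X Y)) =
         coll_tensm C (coll_id X) (coll_rho C Y)" by (rule ax_alpha_rho)
  next
    fix X Y :: "('a, 'o, 'm) cobj" assume "X \<in> coll_obs C"
    then show "coll_comp (coll_comp (coll_tensm C (coll_id X) (coll_lambda C Y)) (coll_alpha C X (coll_unit C) Y))
           (coll_tensm C (coll_rho C X) (coll_id Y)) = coll_id (coll_tens C X Y)" by (rule ax_tri)
  next
    fix W X Y Z :: "('a, 'o, 'm) cobj"
    show "coll_comp (coll_comp (coll_tensm C (coll_id W) (coll_alpha C X Y Z)) (coll_alpha C W (coll_tens C X Y) Z))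
           (coll_tensm C (coll_alpha C W X Y) (coll_id Z)) =
         coll_comp (coll_alpha C W X (coll_tens C Y Z)) (coll_alpha C (coll_tens C W X) Y Z)" by (rule pentagon)
  qed
qed


end
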